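(* Let $K$ be the $2$-uniform tiling of the plane whose vertex types are $[3^2,6^2]$ and $[3^1,6^1,3^1,6^1]$. If $X$ is a map on the torus that is a quotient $X=K/\Gamma$ of $K$, then the vertices of $X$ form exactly $2$ orbits under ${\rm Aut}(X)$.
   Context: A map is a polyhedral map: a cellular embedding of a connected graph in a closed surface such that the intersection of any two distinct faces is empty, a single vertex, or a single edge. For a vertex $u$, the faces containing $u$ form a cyclic sequence (the face-cycle at $u$); if this cyclic sequence consists of consecutive blocks of $n_1$ $p_1$-gons, then $n_2$ $p_2$-gons, ..., then $n_k$ $p_k$-gons, with cyclically consecutive $p_i$ distinct, then $u$ is said to have type $[p_1^{n_1},\dots,p_k^{n_k}]$ (defined up to cyclic shift and reversal). A $2$-uniform tiling is an edge-to-edge tiling of the Euclidean plane $\mathbb{R}^2$ by regular polygons whose symmetry group has exactly two orbits on the set of vertices; viewed as a map on the plane, its vertices have (at most) two types, listed as $[W;Z]$. (Up to isomorphism there are exactly $20$ such tilings; there is exactly one with the vertex types named in the claim.) For a map $K$ on the plane, a quotient of $K$ on the torus is a map $X$ on the torus together with a polyhedral covering map $\eta:K\to X$ with $X=K/\Gamma$, where $\Gamma\le {\rm Aut}(K)$ is a subgroup acting without fixed vertices, edges or faces and $K/\Gamma$ is homeomorphic to the torus. ${\rm Aut}(X)$ denotes the automorphism group of the map $X$, acting on its vertex set $V(X)$. *)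

theory Defs
  imports Main
begin

text \<open>A polyhedral map is determined by its vertex set V, its edge set E (2-element vertex sets)
and its face set F (faces given by their vertex sets).\<close>

type_synonym 'v mapdata = "'v set \<times> 'v set set \<times> 'v set set"

definition map_aut :: "'v mapdata \<Rightarrow> ('v \<Rightarrow> 'v) set" where
  "map_aut M = (case M of (V, E, F) \<Rightarrow>
     {f. bij_betw f V V \<and> (\<forall>x. x \<notin> V \<longrightarrow> f x = x) \<and>
         (image f) ` E = E \<and> (image f) ` F = F})"

definition aut_orbit :: "('v \<Rightarrow> 'v) set \<Rightarrow> 'v \<Rightarrow> 'v set" where
  "aut_orbit G x = (\<lambda>g. g x) ` G"

text \<open>Lattice point (a,b) stands for the point a*(1,0) + b*(1/2, sqrt 3/2) of the plane; the
regular triangular tiling has these points as vertices.  The tiling K is obtained by deleting the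
lattice points (a,b) with a - b = 0 mod 4 (the centres of the hexagons): the six triangles around
each deleted point merge into a regular hexagon.  Vertices with a - b = 1,3 mod 4 have type
[3^2,6^2], those with a - b = 2 mod 4 have type [3,6,3,6].\<close>

definition hex_center :: "int \<times> int \<Rightarrow> bool" where
  "hex_center p \<longleftrightarrow> (fst p - snd p) mod 4 = 0"

definition tri_adj :: "int \<times> int \<Rightarrow> int \<times> int \<Rightarrow> bool" where
  "tri_adj p q \<longleftrightarrow> (fst q - fst p, snd q - snd p) \<in>
     {(1,0), (0,1), (-1,1), (-1,0), (0,-1), (1,-1)}"

definition up_tri :: "int \<Rightarrow> int \<Rightarrow> (int \<times> int) set" where
  "up_tri a b = {(a,b), (a+1,b), (a,b+1)}"

definition down_tri :: "int \<Rightarrow> int \<Rightarrow> (int \<times> int) set" where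
  "down_tri a b = {(a+1,b), (a,b+1), (a+1,b+1)}"

definition hexagon :: "int \<times> int \<Rightarrow> (int \<times> int) set" where
  "hexagon p = {q. tri_adj p q}"

definition KV :: "(int \<times> int) set" where
  "KV = {p. \<not> hex_center p}"

definition KE :: "(int \<times> int) set set" where
  "KE = {{p, q} | p q. p \<in> KV \<and> q \<in> KV \<and> tri_adj p q}"

definition KF :: "(int \<times> int) set set" where
  "KF = {T | T a b. (T = up_tri a b \<or> T = down_tri a b) \<and> T \<subseteq> KV}
        \<union> {hexagon p | p. hex_center p}"

definition Ktiling :: "(int \<times> int) mapdata" where
  "Ktiling = (KV, KE, KF)"

text \<open>Orientation of a lattice triangle (positive = counterclockwise in the plane).\<close>

definition orient :: "int \<times> int \<Rightarrow> int \<times> int \<Rightarrow> int \<times> int \<Rightarrow> int" where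
  "orient p q r = (fst q - fst p) * (snd r - snd p) - (snd q - snd p) * (fst r - fst p)"

definition orientation_preserving :: "(int \<times> int \<Rightarrow> int \<times> int) \<Rightarrow> bool" where
  "orientation_preserving g \<longleftrightarrow>
     (\<forall>p q r. {p, q, r} \<in> KF \<and> card {p, q, r} = 3 \<and> orient p q r > 0
        \<longrightarrow> orient (g p) (g q) (g r) > 0)"

definition is_subgroup_aut :: "(int \<times> int \<Rightarrow> int \<times> int) set \<Rightarrow> bool" where
  "is_subgroup_aut \<Gamma> \<longleftrightarrow> \<Gamma> \<subseteq> map_aut Ktiling \<and> id \<in> \<Gamma> \<and>
     (\<forall>g\<in>\<Gamma>. \<forall>h\<in>\<Gamma>. g \<circ> h \<in> \<Gamma>) \<and> (\<forall>g\<in>\<Gamma>. inv g \<in> \<Gamma>)"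

definition acts_freely :: "(int \<times> int \<Rightarrow> int \<times> int) set \<Rightarrow> bool" where
  "acts_freely \<Gamma> \<longleftrightarrow> (\<forall>g\<in>\<Gamma>. g \<noteq> id \<longrightarrow>
     (\<forall>v\<in>KV. g v \<noteq> v) \<and> (\<forall>e\<in>KE. g ` e \<noteq> e) \<and> (\<forall>f\<in>KF. g ` f \<noteq> f))"

definition quotV :: "(int \<times> int \<Rightarrow> int \<times> int) set \<Rightarrow> (int \<times> int) set set" where
  "quotV \<Gamma> = aut_orbit \<Gamma> ` KV"

definition quotE :: "(int \<times> int \<Rightarrow> int \<times> int) set \<Rightarrow> (int \<times> int) set set set" where
  "quotE \<Gamma> = (\<lambda>e. aut_orbit \<Gamma> ` e) ` KE"

definition quotF :: "(int \<times> int \<Rightarrow> int \<times> int) set \<Rightarrow> (int \<times> int) set set set" where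
  "quotF \<Gamma> = (\<lambda>f. aut_orbit \<Gamma> ` f) ` KF"

definition quot_map :: "(int \<times> int \<Rightarrow> int \<times> int) set \<Rightarrow> (int \<times> int) set mapdata" where
  "quot_map \<Gamma> = (quotV \<Gamma>, quotE \<Gamma>, quotF \<Gamma>)"

text \<open>K/Gamma is homeomorphic to the torus: it is a finite (compact) closed surface, orientable
(Gamma preserves the orientation of the plane) and of Euler characteristic 0.\<close>

definition quotient_is_torus :: "(int \<times> int \<Rightarrow> int \<times> int) set \<Rightarrow> bool" where
  "quotient_is_torus \<Gamma> \<longleftrightarrow> finite (quotV \<Gamma>) \<and>
     int (card (quotV \<Gamma>)) - int (card (quotE \<Gamma>)) + int (card (quotF \<Gamma>)) = 0 \<and>
     (\<forall>g\<in>\<Gamma>. orientation_preserving g)"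

text \<open>X = K/Gamma is a polyhedral map and eta is a polyhedral covering: eta is injective on each
face (faces of X are genuine polygons), distinct edge/face orbits have distinct images, and two
distinct faces of X meet in nothing, a single vertex, or a single (common) edge.\<close>

definition quotient_polyhedral :: "(int \<times> int \<Rightarrow> int \<times> int) set \<Rightarrow> bool" where
  "quotient_polyhedral \<Gamma> \<longleftrightarrow>
     (\<forall>f\<in>KF. inj_on (aut_orbit \<Gamma>) f) \<and>
     (\<forall>e1\<in>KE. \<forall>e2\<in>KE. aut_orbit \<Gamma> ` e1 = aut_orbit \<Gamma> ` e2 \<longrightarrow> (\<exists>g\<in>\<Gamma>. g ` e1 = e2)) \<and>
     (\<forall>f1\<in>KF. \<forall>f2\<in>KF. aut_orbit \<Gamma> ` f1 = aut_orbit \<Gamma> ` f2 \<longrightarrow> (\<exists>g\<in>\<Gamma>. g ` f1 = f2)) \<and>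
     (\<forall>f1\<in>KF. \<forall>f2\<in>KF. aut_orbit \<Gamma> ` f1 \<noteq> aut_orbit \<Gamma> ` f2 \<longrightarrow>
        card (aut_orbit \<Gamma> ` f1 \<inter> aut_orbit \<Gamma> ` f2) \<le> 1 \<or>
        (\<exists>e1\<in>KE. \<exists>e2\<in>KE. e1 \<subseteq> f1 \<and> e2 \<subseteq> f2 \<and>
           aut_orbit \<Gamma> ` e1 = aut_orbit \<Gamma> ` f1 \<inter> aut_orbit \<Gamma> ` f2 \<and>
           aut_orbit \<Gamma> ` e2 = aut_orbit \<Gamma> ` f1 \<inter> aut_orbit \<Gamma> ` f2))"

end

theory Submission
  imports Defs
begin

lemma KV_iff: "p \<in> KV \<longleftrightarrow> (fst p - snd p) mod 4 \<noteq> 0"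
  by (simp add: KV_def hex_center_def)

lemma KV_iff2[simp]: "(a,b) \<in> KV \<longleftrightarrow> (a - b) mod 4 \<noteq> 0"
  by (simp add: KV_def hex_center_def)

lemma hexagon_eq: "hexagon (a,b) = {(a+1,b),(a,b+1),(a-1,b+1),(a-1,b),(a,b-1),(a+1,b-1)}"
  unfolding hexagon_def tri_adj_def
  by (auto simp: algebra_simps)

lemma up_tri_eq: "up_tri a b = {(a,b),(a+1,b),(a,b+1)}" by (simp add: up_tri_def)
lemma down_tri_eq: "down_tri a b = {(a+1,b),(a,b+1),(a+1,b+1)}" by (simp add: down_tri_def)

lemma up_sub_KV: "up_tri a b \<subseteq> KV \<longleftrightarrow> (a - b) mod 4 = 2"
  unfolding up_tri_def by simp presburger

lemma down_sub_KV: "down_tri a b \<subseteq> KV \<longleftrightarrow> (a - b) mod 4 = 2"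
  unfolding down_tri_def by simp presburger

lemma hex_sub_KV: "(a - b) mod 4 = 0 \<Longrightarrow> hexagon (a,b) \<subseteq> KV"
  unfolding hexagon_eq by simp presburger

lemma KF_iff: "F \<in> KF \<longleftrightarrow> (\<exists>a b. (a - b) mod 4 = 2 \<and> (F = up_tri a b \<or> F = down_tri a b))
   \<or> (\<exists>a b. (a - b) mod 4 = 0 \<and> F = hexagon (a,b))" (is "?L \<longleftrightarrow> ?R")
proof
  assume "?L"
  then have "(\<exists>a b. (F = up_tri a b \<or> F = down_tri a b) \<and> F \<subseteq> KV) \<or> (\<exists>p. F = hexagon p \<and> hex_center p)"
    unfolding KF_def by blast
  then show ?R
  proof
    assume "\<exists>a b. (F = up_tri a b \<or> F = down_tri a b) \<and> F \<subseteq> KV"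
    then obtain a b :: int where h: "F = up_tri a b \<or> F = down_tri a b" "F \<subseteq> KV" by blast
    then have "(a - b) mod 4 = 2" using up_sub_KV down_sub_KV by metis
    then show ?R using h(1) by blast
  next
    assume "\<exists>p. F = hexagon p \<and> hex_center p"
    then obtain p where h: "F = hexagon p" "hex_center p" by blast
    obtain a b :: int where ab: "p = (a,b)" by (cases p)
    then have "(a - b) mod 4 = 0" using h by (simp add: hex_center_def)
    moreover have "F = hexagon (a,b)" using h ab by simp
    ultimately have "\<exists>a b. (a - b) mod 4 = 0 \<and> F = hexagon (a,b)" by (intro exI conjI)
    then show ?R by (rule disjI2)
  qed
next
  assume ?R
  then show ?L
  proof
    assume "\<exists>a b. (a - b) mod 4 = 2 \<and> (F = up_tri a b \<or> F = down_tri a b)"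
    then obtain a b :: int where h: "(a - b) mod 4 = 2" "F = up_tri a b \<or> F = down_tri a b" by blast
    then have "F \<subseteq> KV" using up_sub_KV down_sub_KV by metis
    then have "F \<in> {T | T a b. (T = up_tri a b \<or> T = down_tri a b) \<and> T \<subseteq> KV}" using h(2) by blast
    then show ?L unfolding KF_def by (rule UnI1)
  next
    assume "\<exists>a b. (a - b) mod 4 = 0 \<and> F = hexagon (a,b)"
    then obtain a b :: int where h: "(a - b) mod 4 = 0" "F = hexagon (a,b)" by (elim exE conjE) (rule that)
    then have "hex_center (a,b)" by (simp add: hex_center_def)
    then have "F \<in> {hexagon p | p. hex_center p}" using h(2) by blast
    then show ?L unfolding KF_def by (rule UnI2)
  qed
qed

lemma KF_sub: "F \<in> KF \<Longrightarrow> F \<subseteq> KV"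
  unfolding KF_def hex_center_def
proof (elim UnE CollectE exE conjE)
  fix T a b assume "F = T" "T \<subseteq> KV" then show "F \<subseteq> KV" by simp
next
  fix p :: "int \<times> int" assume h: "F = hexagon p" "(fst p - snd p) mod 4 = 0"
  obtain a b where "p = (a,b)" by (cases p)
  then show "F \<subseteq> KV" using h hex_sub_KV by simp
qed

lemma KE_iff: "e \<in> KE \<longleftrightarrow> (\<exists>p q. e = {p,q} \<and> p \<in> KV \<and> q \<in> KV \<and> tri_adj p q)"
  by (auto simp: KE_def)

lemma KE_sub: "e \<in> KE \<Longrightarrow> e \<subseteq> KV"
  by (auto simp: KE_def)

lemma tri_adj_iff: "tri_adj (a,b) (c,d) \<longleftrightarrow> (c,d) \<in> {(a+1,b),(a,b+1),(a-1,b+1),(a-1,b),(a,b-1),(a+1,b-1)}"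
  unfolding tri_adj_def by (auto simp: algebra_simps)

lemma card_up: "card (up_tri a b) = 3" by (simp add: up_tri_def)
lemma card_down: "card (down_tri a b) = 3" by (simp add: down_tri_def)
lemma card_hex: "card (hexagon (a,b)) = 6" by (simp add: hexagon_eq)

definition ty2 :: "int \<times> int \<Rightarrow> bool" where "ty2 p \<longleftrightarrow> (fst p - snd p) mod 4 = 2"

lemma KF_iff2: "F \<in> KF \<longleftrightarrow> (\<exists>a b. ty2 (a,b) \<and> (F = up_tri a b \<or> F = down_tri a b))
   \<or> (\<exists>a b. hex_center (a,b) \<and> F = hexagon (a,b))"
  unfolding KF_iff ty2_def hex_center_def by simp


lemma map_aut_iff: "f \<in> map_aut (V,E,F) \<longleftrightarrow> bij_betw f V V \<and> (\<forall>x. x \<notin> V \<longrightarrow> f x = x) \<and>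
         (image f) ` E = E \<and> (image f) ` F = F"
  by (simp add: map_aut_def)

lemma map_aut_id: "id \<in> map_aut (V,E,F)"
  by (simp add: map_aut_iff image_comp)

lemma map_aut_comp: "f \<in> map_aut (V,E,F) \<Longrightarrow> g \<in> map_aut (V,E,F) \<Longrightarrow> f \<circ> g \<in> map_aut (V,E,F)"
  unfolding map_aut_iff
proof (elim conjE, intro conjI)
  assume a: "bij_betw f V V" "\<forall>x. x \<notin> V \<longrightarrow> f x = x" "image f ` E = E" "image f ` F = F"
     "bij_betw g V V" "\<forall>x. x \<notin> V \<longrightarrow> g x = x" "image g ` E = E" "image g ` F = F"
  show "bij_betw (f \<circ> g) V V" using a(1,5) by (rule bij_betw_trans[rotated])
  show "\<forall>x. x \<notin> V \<longrightarrow> (f \<circ> g) x = x" using a(2,6) by simp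
  have "image (f \<circ> g) ` E = image f ` (image g ` E)" by (simp add: image_comp)
  then show "image (f \<circ> g) ` E = E" using a(3,7) by simp
  have "image (f \<circ> g) ` F = image f ` (image g ` F)" by (simp add: image_comp)
  then show "image (f \<circ> g) ` F = F" using a(4,8) by simp
qed

lemma map_aut_inj: "f \<in> map_aut (V,E,F) \<Longrightarrow> inj f"
  unfolding map_aut_iff
proof (elim conjE)
  assume a: "bij_betw f V V" "\<forall>x. x \<notin> V \<longrightarrow> f x = x"
  show "inj f"
  proof (rule injI)
    fix x y assume xy: "f x = f y"
    have io: "inj_on f V" and im: "f ` V = V" using a(1) by (auto simp: bij_betw_def)
    show "x = y"
    proof (cases "x \<in> V")
      case True
      then have "f x \<in> V" using im by blast
      show ?thesis
      proof (cases "y \<in> V")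
        case True then show ?thesis using \<open>x \<in> V\<close> io xy by (meson inj_onD)
      next
        case False then show ?thesis using \<open>f x \<in> V\<close> xy a(2) by auto
      qed
    next
      case False
      then have "f x = x" using a(2) by simp
      show ?thesis
      proof (cases "y \<in> V")
        case True then have "f y \<in> V" using im by blast
        then show ?thesis using False xy \<open>f x = x\<close> by simp
      next
        case False then show ?thesis using \<open>f x = x\<close> xy a(2) by auto
      qed
    qed
  qed
qed

lemma map_aut_V: "f \<in> map_aut (V,E,F) \<Longrightarrow> x \<in> V \<Longrightarrow> f x \<in> V"
  unfolding map_aut_iff bij_betw_def by (elim conjE) blast

lemma map_aut_E: "f \<in> map_aut (V,E,F) \<Longrightarrow> e \<in> E \<Longrightarrow> f ` e \<in> E"
proof -
  assume a: "f \<in> map_aut (V,E,F)" "e \<in> E"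
  have eq: "image f ` E = E" using a(1) unfolding map_aut_iff by (elim conjE)
  have "f ` e \<in> image f ` E" using a(2) by (rule imageI)
  then show ?thesis unfolding eq .
qed

lemma map_aut_F: "f \<in> map_aut (V,E,F) \<Longrightarrow> e \<in> F \<Longrightarrow> f ` e \<in> F"
proof -
  assume a: "f \<in> map_aut (V,E,F)" "e \<in> F"
  have eq: "image f ` F = F" using a(1) unfolding map_aut_iff by (elim conjE)
  have "f ` e \<in> image f ` F" using a(2) by (rule imageI)
  then show ?thesis unfolding eq .
qed

lemma map_aut_E_surj: "f \<in> map_aut (V,E,F) \<Longrightarrow> e \<in> E \<Longrightarrow> \<exists>e'\<in>E. f ` e' = e"
proof -
  assume "f \<in> map_aut (V,E,F)" and e: "e \<in> E"
  then have eq: "image f ` E = E" unfolding map_aut_iff by (elim conjE)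
  have "e \<in> image f ` E" unfolding eq by (rule e)
  then show ?thesis by blast
qed

lemma image_eq_by_inverse:
  assumes "\<And>s. s \<in> S \<Longrightarrow> f ` s \<in> S" "\<And>s. s \<in> S \<Longrightarrow> g ` s \<in> S" "\<And>x. f (g x) = x"
  shows "image f ` S = S"
proof
  show "image f ` S \<subseteq> S"
  proof
    fix t assume "t \<in> image f ` S"
    then obtain s where "s \<in> S" "t = f ` s" by blast
    then show "t \<in> S" using assms(1) by simp
  qed
  show "S \<subseteq> image f ` S"
  proof
    fix s assume sS: "s \<in> S"
    have eq: "f ` (g ` s) = s" using assms(3) by (simp add: image_image)
    have "g ` s \<in> S" using assms(2) sS by simp
    then have "f ` (g ` s) \<in> image f ` S" by (rule imageI)
    then show "s \<in> image f ` S" unfolding eq .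
  qed
qed

lemma map_aut_by_inverse:
  assumes "\<And>x. x \<in> V \<Longrightarrow> f x \<in> V" "\<And>x. x \<in> V \<Longrightarrow> g x \<in> V"
    "\<And>x. f (g x) = x" "\<And>x. g (f x) = x" "\<And>x. x \<notin> V \<Longrightarrow> f x = x"
    "\<And>s. s \<in> E \<Longrightarrow> f ` s \<in> E" "\<And>s. s \<in> E \<Longrightarrow> g ` s \<in> E"
    "\<And>s. s \<in> F \<Longrightarrow> f ` s \<in> F" "\<And>s. s \<in> F \<Longrightarrow> g ` s \<in> F"
  shows "f \<in> map_aut (V,E,F)"
  unfolding map_aut_iff
proof (intro conjI)
  show "bij_betw f V V"
    by (rule bij_betw_byWitness[where f'=g]) (simp_all add: assms(1-4) image_subset_iff)
  show "image f ` E = E" by (rule image_eq_by_inverse[where g=g]) (simp_all add: assms(3,6,7))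
  show "image f ` F = F" by (rule image_eq_by_inverse[where g=g]) (simp_all add: assms(3,8,9))
  show "\<forall>x. x \<notin> V \<longrightarrow> f x = x" using assms(5) by blast
qed


definition tr :: "int \<times> int \<Rightarrow> int \<times> int \<Rightarrow> int \<times> int" where
  "tr t p = (if p \<in> KV then (fst p + fst t, snd p + snd t) else p)"

definition rho :: "int \<times> int \<Rightarrow> int \<times> int \<Rightarrow> int \<times> int" where
  "rho t p = (if p \<in> KV then (fst t - fst p, snd t - snd p) else p)"

lemma tr_KV: "hex_center (t1,t2) \<Longrightarrow> p \<in> KV \<Longrightarrow> tr (t1,t2) p \<in> KV"
  by (cases p) (simp add: tr_def hex_center_def, presburger)

lemma rho_KV: "hex_center (t1,t2) \<Longrightarrow> p \<in> KV \<Longrightarrow> rho (t1,t2) p \<in> KV"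
  by (cases p) (simp add: rho_def hex_center_def, presburger)

lemma tr_inv: "hex_center (t1,t2) \<Longrightarrow> tr (t1,t2) (tr (-t1,-t2) p) = p"
proof (cases "p \<in> KV")
  case True
  assume h: "hex_center (t1,t2)"
  then have "hex_center (-t1,-t2)" unfolding hex_center_def by simp presburger
  then have "tr (-t1,-t2) p \<in> KV" using True tr_KV by blast
  then show ?thesis using True by (simp add: tr_def)
qed (simp add: tr_def)

lemma tr_inv': "hex_center (t1,t2) \<Longrightarrow> tr (-t1,-t2) (tr (t1,t2) p) = p"
proof (cases "p \<in> KV")
  case True
  assume h: "hex_center (t1,t2)"
  then have "tr (t1,t2) p \<in> KV" using True tr_KV by blast
  then show ?thesis using True by (simp add: tr_def)
qed (simp add: tr_def)

lemma rho_inv: "hex_center (t1,t2) \<Longrightarrow> rho (t1,t2) (rho (t1,t2) p) = p"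
proof (cases "p \<in> KV")
  case True
  assume h: "hex_center (t1,t2)"
  then have "rho (t1,t2) p \<in> KV" using True rho_KV by blast
  then show ?thesis using True by (simp add: rho_def)
qed (simp add: rho_def)

lemma tr_image: "S \<subseteq> KV \<Longrightarrow> tr t ` S = (\<lambda>p. (fst p + fst t, snd p + snd t)) ` S"
  unfolding tr_def by (intro image_cong) auto

lemma rho_image: "S \<subseteq> KV \<Longrightarrow> rho t ` S = (\<lambda>p. (fst t - fst p, snd t - snd p)) ` S"
  unfolding rho_def by (intro image_cong) auto

lemma tr_KE: assumes "hex_center (t1,t2)" "e \<in> KE" shows "tr (t1,t2) ` e \<in> KE"
proof -
  obtain p q where e: "e = {p,q}" "p \<in> KV" "q \<in> KV" "tri_adj p q" using assms(2) KE_iff by blast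
  have "tr (t1,t2) ` e = {tr (t1,t2) p, tr (t1,t2) q}" using e by simp
  moreover have "tri_adj (tr (t1,t2) p) (tr (t1,t2) q)" using e(2-4) by (simp add: tr_def tri_adj_def)
  moreover have "tr (t1,t2) p \<in> KV" "tr (t1,t2) q \<in> KV" using e(2,3) assms(1) tr_KV by auto
  ultimately show ?thesis unfolding KE_iff by blast
qed

lemma rho_KE: assumes "hex_center (t1,t2)" "e \<in> KE" shows "rho (t1,t2) ` e \<in> KE"
proof -
  obtain p q where e: "e = {p,q}" "p \<in> KV" "q \<in> KV" "tri_adj p q" using assms(2) KE_iff by blast
  have "rho (t1,t2) ` e = {rho (t1,t2) p, rho (t1,t2) q}" using e by simp
  moreover have "tri_adj (rho (t1,t2) p) (rho (t1,t2) q)" using e(2-4) by (auto simp add: rho_def tri_adj_def)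
  moreover have "rho (t1,t2) p \<in> KV" "rho (t1,t2) q \<in> KV" using e(2,3) assms(1) rho_KV by auto
  ultimately show ?thesis unfolding KE_iff by blast
qed

lemma tr_KF: assumes t: "hex_center (t1,t2)" and F: "F \<in> KF" shows "tr (t1,t2) ` F \<in> KF"
proof -
  have sub: "F \<subseteq> KV" using F KF_sub by blast
  have img: "tr (t1,t2) ` F = (\<lambda>p. (fst p + t1, snd p + t2)) ` F" using tr_image[OF sub] by simp
  from F consider (u) a b where "ty2 (a,b)" "F = up_tri a b" | (d) a b where "ty2 (a,b)" "F = down_tri a b"
    | (h) a b where "hex_center (a,b)" "F = hexagon (a,b)"
    unfolding KF_iff2 by blast
  then show ?thesis
  proof cases
    case u
    have "tr (t1,t2) ` F = up_tri (a+t1) (b+t2)" unfolding img unfolding u(2) by (simp add: up_tri_def algebra_simps)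
    moreover have "ty2 (a+t1, b+t2)" using u(1) t unfolding ty2_def hex_center_def by simp presburger
    ultimately show ?thesis unfolding KF_iff2 by blast
  next
    case d
    have "tr (t1,t2) ` F = down_tri (a+t1) (b+t2)" unfolding img unfolding d(2) by (simp add: down_tri_def algebra_simps)
    moreover have "ty2 (a+t1, b+t2)" using d(1) t unfolding ty2_def hex_center_def by simp presburger
    ultimately show ?thesis unfolding KF_iff2 by blast
  next
    case h
    have "tr (t1,t2) ` F = hexagon (a+t1, b+t2)" unfolding img unfolding h(2) by (simp add: hexagon_eq algebra_simps)
    moreover have "hex_center (a+t1, b+t2)" using h(1) t unfolding hex_center_def by simp presburger
    ultimately show ?thesis unfolding KF_iff2 by blast
  qed
qed

lemma rho_KF: assumes t: "hex_center (t1,t2)" and F: "F \<in> KF" shows "rho (t1,t2) ` F \<in> KF"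
proof -
  have sub: "F \<subseteq> KV" using F KF_sub by blast
  have img: "rho (t1,t2) ` F = (\<lambda>p. (t1 - fst p, t2 - snd p)) ` F" using rho_image[OF sub] by simp
  from F consider (u) a b where "ty2 (a,b)" "F = up_tri a b" | (d) a b where "ty2 (a,b)" "F = down_tri a b"
    | (h) a b where "hex_center (a,b)" "F = hexagon (a,b)"
    unfolding KF_iff2 by blast
  then show ?thesis
  proof cases
    case u
    have "rho (t1,t2) ` F = down_tri (t1-a-1) (t2-b-1)" unfolding img unfolding u(2) by (auto simp add: up_tri_def down_tri_def)
    moreover have "ty2 (t1-a-1, t2-b-1)" using u(1) t unfolding ty2_def hex_center_def by simp presburger
    ultimately show ?thesis unfolding KF_iff2 by blast
  next
    case d
    have "rho (t1,t2) ` F = up_tri (t1-a-1) (t2-b-1)" unfolding img unfolding d(2) by (auto simp add: up_tri_def down_tri_def)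
    moreover have "ty2 (t1-a-1, t2-b-1)" using d(1) t unfolding ty2_def hex_center_def by simp presburger
    ultimately show ?thesis unfolding KF_iff2 by blast
  next
    case h
    have "rho (t1,t2) ` F = hexagon (t1-a, t2-b)" unfolding img unfolding h(2) by (auto simp add: hexagon_eq algebra_simps)
    moreover have "hex_center (t1-a, t2-b)" using h(1) t unfolding hex_center_def by simp presburger
    ultimately show ?thesis unfolding KF_iff2 by blast
  qed
qed

lemma tr_aut: assumes t: "hex_center (t1,t2)" shows "tr (t1,t2) \<in> map_aut Ktiling"
proof -
  have t': "hex_center (-t1,-t2)" using t unfolding hex_center_def by simp presburger
  show ?thesis unfolding Ktiling_def
  proof (rule map_aut_by_inverse[where g="tr (-t1,-t2)"])
    show "\<And>x. x \<notin> KV \<Longrightarrow> tr (t1, t2) x = x" by (simp add: tr_def)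
  qed (simp_all add: tr_KV[OF t] tr_KV[OF t'] tr_inv[OF t] tr_inv'[OF t] tr_KE[OF t] tr_KE[OF t'] tr_KF[OF t] tr_KF[OF t'])
qed

lemma rho_aut: assumes t: "hex_center (t1,t2)" shows "rho (t1,t2) \<in> map_aut Ktiling"
  unfolding Ktiling_def
proof (rule map_aut_by_inverse[where g="rho (t1,t2)"])
  show "\<And>x. x \<notin> KV \<Longrightarrow> rho (t1, t2) x = x" by (simp add: rho_def)
qed (simp_all add: rho_KV[OF t] rho_inv[OF t] rho_KE[OF t] rho_KF[OF t])


lemma mem_up: "(c,d) \<in> up_tri x y \<longleftrightarrow> (c = x \<and> d = y) \<or> (c = x+1 \<and> d = y) \<or> (c = x \<and> d = y+1)"
  by (auto simp: up_tri_def)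

lemma mem_down: "(c,d) \<in> down_tri x y \<longleftrightarrow> (c = x+1 \<and> d = y) \<or> (c = x \<and> d = y+1) \<or> (c = x+1 \<and> d = y+1)"
  by (auto simp: down_tri_def)

lemma tri_adj_sym: "tri_adj p q \<Longrightarrow> tri_adj q p"
  by (cases p, cases q) (auto simp: tri_adj_def)

lemma tri_adj_irrefl: "\<not> tri_adj p p"
  by (simp add: tri_adj_def)

lemma KE_pair: assumes "{p,q} \<in> KE" shows "p \<in> KV \<and> q \<in> KV \<and> tri_adj p q"
proof -
  obtain p' q' where h: "{p,q} = {p',q'}" "p' \<in> KV" "q' \<in> KV" "tri_adj p' q'" using assms KE_iff by blast
  have "p' \<noteq> q'" using h(4) tri_adj_irrefl by metis
  then have "(p = p' \<and> q = q') \<or> (p = q' \<and> q = p')" using h(1) by (metis doubleton_eq_iff)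
  then show ?thesis using h tri_adj_sym by metis
qed

definition chr :: "int \<times> int \<Rightarrow> bool" where
  "chr p \<longleftrightarrow> (\<forall>q. {p,q} \<in> KE \<longrightarrow> (\<exists>T\<in>KF. card T = 3 \<and> p \<in> T \<and> q \<in> T))"

lemma ty2_chr: assumes "ty2 p" shows "chr p"
  unfolding chr_def
proof (intro allI impI)
  fix q assume "{p,q} \<in> KE"
  then have q: "q \<in> KV" "tri_adj p q" using KE_pair by auto
  obtain a b where p: "p = (a,b)" by (cases p)
  obtain c d where qq: "q = (c,d)" by (cases q)
  have t: "(a - b) mod 4 = 2" using assms p by (simp add: ty2_def)
  have "(c = a+1 \<and> d = b) \<or> (c = a \<and> d = b+1) \<or> (c = a-1 \<and> d = b+1) \<or> (c = a-1 \<and> d = b) \<or> (c = a \<and> d = b-1) \<or> (c = a+1 \<and> d = b-1)"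
    using q(2) p qq unfolding tri_adj_def by auto
  moreover have "(c - d) mod 4 \<noteq> 0" using q(1) qq by simp
  ultimately have "((c = a+1 \<and> d = b) \<or> (c = a \<and> d = b+1)) \<or> ((c = a-1 \<and> d = b) \<or> (c = a \<and> d = b-1))" using t by (elim disjE; presburger)
  then have cases: "(c,d) \<in> {(a+1,b),(a,b+1)} \<or> (c,d) \<in> {(a-1,b),(a,b-1)}" by auto
  have t2: "ty2 (a,b)" "ty2 (a-1,b-1)" using t by (simp_all add: ty2_def)
  have u: "up_tri a b \<in> KF" using t2(1) unfolding KF_iff2 by blast
  have dd: "down_tri (a-1) (b-1) \<in> KF" using t2(2) unfolding KF_iff2 by blast
  show "\<exists>T\<in>KF. card T = 3 \<and> p \<in> T \<and> q \<in> T"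
    using cases
  proof
    assume "(c,d) \<in> {(a+1,b),(a,b+1)}"
    then have "p \<in> up_tri a b" "q \<in> up_tri a b" using p qq by (auto simp: up_tri_def)
    then show ?thesis using u card_up by blast
  next
    assume "(c,d) \<in> {(a-1,b),(a,b-1)}"
    then have "p \<in> down_tri (a-1) (b-1)" "q \<in> down_tri (a-1) (b-1)" using p qq by (auto simp: down_tri_def)
    then show ?thesis using dd card_down by blast
  qed
qed

lemma KF_card3: assumes "T \<in> KF" "card T = 3"
  shows "\<exists>a b. ty2 (a,b) \<and> (T = up_tri a b \<or> T = down_tri a b)"
proof -
  have "\<not> (\<exists>a b. hex_center (a,b) \<and> T = hexagon (a,b))" using assms(2) card_hex by auto
  then show ?thesis using assms(1) unfolding KF_iff2 by blast
qed

lemma nonty2_nchr: assumes "p \<in> KV" "\<not> ty2 p" shows "\<not> chr p"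
proof
  assume c: "chr p"
  obtain a b where p: "p = (a,b)" by (cases p)
  have k: "(a - b) mod 4 = 1 \<or> (a - b) mod 4 = 3" using assms p unfolding ty2_def by simp presburger
  define q where "q = (if (a - b) mod 4 = 1 then (a-1,b+1) else (a+1,b-1))"
  have qKV: "q \<in> KV" using k unfolding q_def by (simp, presburger)
  have "tri_adj p q" using p unfolding q_def tri_adj_def by simp
  then have "{p,q} \<in> KE" using qKV assms(1) unfolding KE_iff by blast
  then obtain T where T: "T \<in> KF" "card T = 3" "p \<in> T" "q \<in> T" using c unfolding chr_def by blast
  then obtain x y where xy: "ty2 (x,y)" "T = up_tri x y \<or> T = down_tri x y" using KF_card3 by blast
  have t: "(x - y) mod 4 = 2" using xy(1) by (simp add: ty2_def)
  have qq: "q = (if (a - b) mod 4 = 1 then (a-1,b+1) else (a+1,b-1))" by (rule q_def)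
  obtain c d where cd: "q = (c,d)" by (cases q)
  have cd2: "(c = a - 1 \<and> d = b + 1 \<and> (a - b) mod 4 = 1) \<or> (c = a + 1 \<and> d = b - 1 \<and> (a - b) mod 4 = 3)"
    using qq cd k by (cases "(a - b) mod 4 = 1") auto
  have m: "(a,b) \<in> T" "(c,d) \<in> T" using T(3,4) p cd by auto
  have up_case: "(a,b) \<in> up_tri x y \<Longrightarrow> (c,d) \<in> up_tri x y \<Longrightarrow> False"
  proof -
    assume h: "(a,b) \<in> up_tri x y" "(c,d) \<in> up_tri x y"
    from cd2 show False
    proof
      assume e: "c = a - 1 \<and> d = b + 1 \<and> (a - b) mod 4 = 1"
      then have "a = x + 1 \<and> b = y" using h unfolding mem_up by auto
      then have "(a - b) mod 4 = ((x - y) + 1) mod 4" by (simp add: algebra_simps)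
      then show False using e t by presburger
    next
      assume e: "c = a + 1 \<and> d = b - 1 \<and> (a - b) mod 4 = 3"
      then have "a = x \<and> b = y + 1" using h unfolding mem_up by auto
      then have "(a - b) mod 4 = ((x - y) - 1) mod 4" by (simp add: algebra_simps)
      then show False using e t by presburger
    qed
  qed
  have down_case: "(a,b) \<in> down_tri x y \<Longrightarrow> (c,d) \<in> down_tri x y \<Longrightarrow> False"
  proof -
    assume h: "(a,b) \<in> down_tri x y" "(c,d) \<in> down_tri x y"
    from cd2 show False
    proof
      assume e: "c = a - 1 \<and> d = b + 1 \<and> (a - b) mod 4 = 1"
      then have "a = x + 1 \<and> b = y" using h unfolding mem_down by auto
      then have "(a - b) mod 4 = ((x - y) + 1) mod 4" by (simp add: algebra_simps)
      then show False using e t by presburger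
    next
      assume e: "c = a + 1 \<and> d = b - 1 \<and> (a - b) mod 4 = 3"
      then have "a = x \<and> b = y + 1" using h unfolding mem_down by auto
      then have "(a - b) mod 4 = ((x - y) - 1) mod 4" by (simp add: algebra_simps)
      then show False using e t by presburger
    qed
  qed
  show False using xy(2) m up_case down_case by auto
qed

lemma aut_KV: "f \<in> map_aut Ktiling \<Longrightarrow> p \<in> KV \<Longrightarrow> f p \<in> KV"
  unfolding Ktiling_def by (rule map_aut_V)

lemma aut_inj: "f \<in> map_aut Ktiling \<Longrightarrow> inj f"
  unfolding Ktiling_def by (rule map_aut_inj)

lemma aut_KE: "f \<in> map_aut Ktiling \<Longrightarrow> e \<in> KE \<Longrightarrow> f ` e \<in> KE"
  unfolding Ktiling_def by (rule map_aut_E)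

lemma aut_KF: "f \<in> map_aut Ktiling \<Longrightarrow> e \<in> KF \<Longrightarrow> f ` e \<in> KF"
  unfolding Ktiling_def by (rule map_aut_F)

lemma aut_KE_surj: "f \<in> map_aut Ktiling \<Longrightarrow> e \<in> KE \<Longrightarrow> \<exists>e'\<in>KE. f ` e' = e"
  unfolding Ktiling_def by (rule map_aut_E_surj)

lemma aut_chr: assumes f: "f \<in> map_aut Ktiling" and c: "chr p" shows "chr (f p)"
  unfolding chr_def
proof (intro allI impI)
  fix q' assume "{f p, q'} \<in> KE"
  then obtain e where e: "e \<in> KE" "f ` e = {f p, q'}" using aut_KE_surj[OF f] by blast
  obtain x y where xy: "e = {x,y}" using e(1) KE_iff by blast
  have inj: "inj f" using aut_inj[OF f] .
  have "{f x, f y} = {f p, q'}" using e(2) xy by simp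
  then have "(f x = f p \<and> f y = q') \<or> (f y = f p \<and> f x = q')" by (metis doubleton_eq_iff)
  then obtain y' where y': "f y' = q'" "{p, y'} = e"
    using inj xy by (metis injD insert_commute)
  then obtain T where T: "T \<in> KF" "card T = 3" "p \<in> T" "y' \<in> T" using c e(1) unfolding chr_def by blast
  have "f ` T \<in> KF" using aut_KF[OF f T(1)] .
  moreover have "card (f ` T) = 3" using T(2) inj by (simp add: card_image inj_on_subset)
  moreover have "f p \<in> f ` T" "q' \<in> f ` T" using T(3,4) y'(1) by auto
  ultimately show "\<exists>T\<in>KF. card T = 3 \<and> f p \<in> T \<and> q' \<in> T" by blast
qed

lemma aut_ty2: assumes f: "f \<in> map_aut Ktiling" and p: "p \<in> KV" "ty2 p" shows "ty2 (f p)"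
proof (rule ccontr)
  assume "\<not> ty2 (f p)"
  moreover have "f p \<in> KV" using aut_KV[OF f p(1)] .
  ultimately have "\<not> chr (f p)" using nonty2_nchr by blast
  moreover have "chr (f p)" using aut_chr[OF f ty2_chr[OF p(2)]] .
  ultimately show False by contradiction
qed


lemma mem_hex: "(c,d) \<in> hexagon (a,b) \<longleftrightarrow> (c = a+1 \<and> d = b) \<or> (c = a \<and> d = b+1) \<or> (c = a-1 \<and> d = b+1)
   \<or> (c = a-1 \<and> d = b) \<or> (c = a \<and> d = b-1) \<or> (c = a+1 \<and> d = b-1)"
  unfolding hexagon_eq by auto

lemma KF_cases:
  assumes "F \<in> KF"
  obtains (u) a b where "ty2 (a,b)" "F = up_tri a b" | (d) a b where "ty2 (a,b)" "F = down_tri a b"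
    | (h) a b where "hex_center (a,b)" "F = hexagon (a,b)"
  using assms unfolding KF_iff2 by blast

lemma tri_step:
  assumes f: "f \<in> map_aut Ktiling" and fp: "f p = p" and fq: "f q = q"
    and F1: "F1 \<in> KF" "f ` F1 = F1" "p \<in> F1" "q \<in> F1" "r \<notin> F1"
    and F2: "F2 \<in> KF" "F2 = {p,q,r}"
    and only: "\<And>F. F \<in> KF \<Longrightarrow> p \<in> F \<Longrightarrow> q \<in> F \<Longrightarrow> F = F1 \<or> F = F2"
  shows "f r = r"
proof -
  have inj: "inj f" using aut_inj[OF f] .
  have "f ` F2 \<in> KF" using aut_KF[OF f F2(1)] .
  moreover have "p \<in> f ` F2" "q \<in> f ` F2" using fp fq F2(2) by auto
  ultimately have "f ` F2 = F1 \<or> f ` F2 = F2" using only by blast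
  moreover have "f ` F2 \<noteq> F1"
  proof
    assume "f ` F2 = F1"
    then have "f r \<in> F1" using F2(2) by auto
    then have "f r \<in> f ` F1" using F1(2) by simp
    then have "r \<in> F1" using inj by (auto dest: injD)
    then show False using F1(5) by simp
  qed
  ultimately have "f ` F2 = F2" by simp
  then have fr: "f r \<in> {p,q,r}" using F2(2) by auto
  have "r \<noteq> p" "r \<noteq> q" using F1(3,4,5) by auto
  then have "f r \<noteq> f p" "f r \<noteq> f q" using inj by (auto dest: injD)
  then show ?thesis using fr fp fq by auto
qed

lemma hex_step:
  assumes f: "f \<in> map_aut Ktiling" and fp: "f p = p" and fq: "f q = q"
    and F1: "F1 \<in> KF" "f ` F1 = F1" "z \<in> F1" "z \<notin> F2"
    and F2: "F2 \<in> KF" "p \<in> F2" "q \<in> F2"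
    and only: "\<And>F. F \<in> KF \<Longrightarrow> p \<in> F \<Longrightarrow> q \<in> F \<Longrightarrow> F = F1 \<or> F = F2"
  shows "f ` F2 = F2"
proof -
  have inj: "inj f" using aut_inj[OF f] .
  have "f ` F2 \<in> KF" using aut_KF[OF f F2(1)] .
  moreover have "p \<in> f ` F2" "q \<in> f ` F2" using fp fq F2(2,3) by (metis imageI)+
  ultimately have "f ` F2 = F1 \<or> f ` F2 = F2" using only by blast
  moreover have "f ` F2 \<noteq> F1"
  proof
    assume "f ` F2 = F1"
    then have "f ` F2 = f ` F1" using F1(2) by simp
    then have "F2 = F1" using inj by (simp add: inj_image_eq_iff)
    then show False using F1(3,4) by simp
  qed
  ultimately show ?thesis by simp
qed

lemma hex_walk:
  assumes f: "f \<in> map_aut Ktiling" and H: "f ` H = H" and fx: "f x = x" and fy: "f y = y"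
    and w: "w \<in> H" "{y,w} \<in> KE" "w \<noteq> x"
    and only: "\<And>z. z \<in> H \<Longrightarrow> tri_adj y z \<Longrightarrow> z = x \<or> z = w"
  shows "f w = w"
proof -
  have inj: "inj f" using aut_inj[OF f] .
  have "f w \<in> H" using w(1) H by auto
  moreover have "{y, f w} \<in> KE" using aut_KE[OF f w(2)] fy by simp
  then have "tri_adj y (f w)" using KE_pair by blast
  ultimately have "f w = x \<or> f w = w" using only by blast
  moreover have "f w \<noteq> x" using w(3) fx inj by (metis injD)
  ultimately show ?thesis by simp
qed


lemma mem_up': "(c,d) \<in> up_tri x y \<longleftrightarrow> (x = c \<and> y = d) \<or> (x = c - 1 \<and> y = d) \<or> (x = c \<and> y = d - 1)"
  unfolding up_tri_def
  apply (rule iffI)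
   apply (elim insertE emptyE; simp)
  apply (elim disjE conjE; simp)
  done
lemma mem_down': "(c,d) \<in> down_tri x y \<longleftrightarrow> (x = c - 1 \<and> y = d) \<or> (x = c \<and> y = d - 1) \<or> (x = c - 1 \<and> y = d - 1)"
  unfolding down_tri_def
  apply (rule iffI)
   apply (elim insertE emptyE; simp)
  apply (elim disjE conjE; simp)
  done
lemma mem_hex': "(c,d) \<in> hexagon (a,b) \<longleftrightarrow> (a = c-1 \<and> b = d) \<or> (a = c \<and> b = d-1) \<or> (a = c+1 \<and> b = d-1)
   \<or> (a = c+1 \<and> b = d) \<or> (a = c \<and> b = d+1) \<or> (a = c-1 \<and> b = d+1)"
  unfolding hexagon_eq
  apply (rule iffI)
   apply (elim insertE emptyE; simp)
  apply (elim disjE conjE; simp)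
  done

lemma f1: "F \<in> KF \<Longrightarrow> (2,-1) \<in> F \<Longrightarrow> (1,0) \<in> F \<Longrightarrow> F = up_tri 1 (-1) \<or> F = down_tri 1 (-1)"
  by (erule KF_cases; simp only: mem_up' mem_down' mem_hex'; elim disjE conjE; simp add: ty2_def hex_center_def)

lemma fc1: "F \<in> KF \<Longrightarrow> (2,-1) \<in> F \<Longrightarrow> (1,0) \<in> F \<Longrightarrow> F = up_tri 1 (-1) \<or> F = down_tri 1 (-1)"
  by (erule KF_cases; simp only: mem_up' mem_down' mem_hex'; elim disjE conjE; simp add: ty2_def hex_center_def)

lemma fc2: "F \<in> KF \<Longrightarrow> (2,0) \<in> F \<Longrightarrow> (2,-1) \<in> F \<Longrightarrow> F = down_tri 1 (-1) \<or> F = hexagon (3,-1)"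
  by (erule KF_cases; simp only: mem_up' mem_down' mem_hex'; elim disjE conjE; simp add: ty2_def hex_center_def)

lemma fc3: "F \<in> KF \<Longrightarrow> (2,0) \<in> F \<Longrightarrow> (3,0) \<in> F \<Longrightarrow> F = hexagon (3,-1) \<or> F = up_tri 2 0"
  by (erule KF_cases; simp only: mem_up' mem_down' mem_hex'; elim disjE conjE; simp add: ty2_def hex_center_def)

lemma fc4: "F \<in> KF \<Longrightarrow> (1,-1) \<in> F \<Longrightarrow> (1,0) \<in> F \<Longrightarrow> F = up_tri 1 (-1) \<or> F = hexagon (0,0)"
  by (erule KF_cases; simp only: mem_up' mem_down' mem_hex'; elim disjE conjE; simp add: ty2_def hex_center_def)

lemma fc5: "F \<in> KF \<Longrightarrow> (1,-1) \<in> F \<Longrightarrow> (0,-1) \<in> F \<Longrightarrow> F = hexagon (0,0) \<or> F = down_tri 0 (-2)"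
  by (erule KF_cases; simp only: mem_up' mem_down' mem_hex'; elim disjE conjE; simp add: ty2_def hex_center_def)

lemma fc6: "F \<in> KF \<Longrightarrow> (0,-1) \<in> F \<Longrightarrow> (1,-2) \<in> F \<Longrightarrow> F = down_tri 0 (-2) \<or> F = up_tri 0 (-2)"
  by (erule KF_cases; simp only: mem_up' mem_down' mem_hex'; elim disjE conjE; simp add: ty2_def hex_center_def)

lemma fc7: "F \<in> KF \<Longrightarrow> (3,0) \<in> F \<Longrightarrow> (4,-1) \<in> F \<Longrightarrow> F = hexagon (3,-1) \<or> F = hexagon (4,0)"
  by (erule KF_cases; simp only: mem_up' mem_down' mem_hex'; elim disjE conjE; simp add: ty2_def hex_center_def)

lemma fc8: "F \<in> KF \<Longrightarrow> (5,-1) \<in> F \<Longrightarrow> (5,0) \<in> F \<Longrightarrow> F = hexagon (4,0) \<or> F = up_tri 5 (-1)"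
  by (erule KF_cases; simp only: mem_up' mem_down' mem_hex'; elim disjE conjE; simp add: ty2_def hex_center_def)

lemma fc9: "F \<in> KF \<Longrightarrow> (0,-1) \<in> F \<Longrightarrow> (-1,0) \<in> F \<Longrightarrow> F = hexagon (0,0) \<or> F = hexagon (-1,-1)"
  by (erule KF_cases; simp only: mem_up' mem_down' mem_hex'; elim disjE conjE; simp add: ty2_def hex_center_def)

lemma fc10: "F \<in> KF \<Longrightarrow> (-2,0) \<in> F \<Longrightarrow> (-2,-1) \<in> F \<Longrightarrow> F = hexagon (-1,-1) \<or> F = down_tri (-3) (-1)"
  by (erule KF_cases; simp only: mem_up' mem_down' mem_hex'; elim disjE conjE; simp add: ty2_def hex_center_def)

lemma fc11: "F \<in> KF \<Longrightarrow> (-2,-1) \<in> F \<Longrightarrow> (-3,0) \<in> F \<Longrightarrow> F = down_tri (-3) (-1) \<or> F = up_tri (-3) (-1)"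
  by (erule KF_cases; simp only: mem_up' mem_down' mem_hex'; elim disjE conjE; simp add: ty2_def hex_center_def)

lemma tri_adj_hex: "tri_adj y z \<longleftrightarrow> z \<in> hexagon y" by (simp add: hexagon_def)

lemma wk1: "z \<in> hexagon (3,-1) \<Longrightarrow> tri_adj (2,0) z \<Longrightarrow> z = (2,-1) \<or> z = (3,0)"
  unfolding tri_adj_hex by (cases z; simp only: mem_hex; elim disjE conjE; simp)

lemma wk2: "z \<in> hexagon (3,-1) \<Longrightarrow> tri_adj (3,0) z \<Longrightarrow> z = (2,0) \<or> z = (4,-1)"
  unfolding tri_adj_hex by (cases z; simp only: mem_hex; elim disjE conjE; simp)

lemma wk3: "z \<in> hexagon (4,0) \<Longrightarrow> tri_adj (4,-1) z \<Longrightarrow> z = (3,0) \<or> z = (5,-1)"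
  unfolding tri_adj_hex by (cases z; simp only: mem_hex; elim disjE conjE; simp)

lemma wk4: "z \<in> hexagon (4,0) \<Longrightarrow> tri_adj (5,-1) z \<Longrightarrow> z = (4,-1) \<or> z = (5,0)"
  unfolding tri_adj_hex by (cases z; simp only: mem_hex; elim disjE conjE; simp)

lemma wk5: "z \<in> hexagon (0,0) \<Longrightarrow> tri_adj (1,-1) z \<Longrightarrow> z = (1,0) \<or> z = (0,-1)"
  unfolding tri_adj_hex by (cases z; simp only: mem_hex; elim disjE conjE; simp)

lemma wk6: "z \<in> hexagon (0,0) \<Longrightarrow> tri_adj (0,-1) z \<Longrightarrow> z = (1,-1) \<or> z = (-1,0)"
  unfolding tri_adj_hex by (cases z; simp only: mem_hex; elim disjE conjE; simp)

lemma wk7: "z \<in> hexagon (-1,-1) \<Longrightarrow> tri_adj (-1,0) z \<Longrightarrow> z = (0,-1) \<or> z = (-2,0)"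
  unfolding tri_adj_hex by (cases z; simp only: mem_hex; elim disjE conjE; simp)

lemma wk8: "z \<in> hexagon (-1,-1) \<Longrightarrow> tri_adj (-2,0) z \<Longrightarrow> z = (-1,0) \<or> z = (-2,-1)"
  unfolding tri_adj_hex by (cases z; simp only: mem_hex; elim disjE conjE; simp)


lemma upKF: "ty2 (a,b) \<Longrightarrow> up_tri a b \<in> KF" unfolding KF_iff2 by blast
lemma downKF: "ty2 (a,b) \<Longrightarrow> down_tri a b \<in> KF" unfolding KF_iff2 by blast
lemma hexKF: "hex_center (a,b) \<Longrightarrow> hexagon (a,b) \<in> KF" unfolding KF_iff2 by blast
lemma KE_intro: "p \<in> KV \<Longrightarrow> q \<in> KV \<Longrightarrow> tri_adj p q \<Longrightarrow> {p,q} \<in> KE" unfolding KE_iff by blast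

lemma rigid_step:
  assumes f: "f \<in> map_aut Ktiling" and h0: "f (1,-1) = (1,-1)" "f (2,-1) = (2,-1)" "f (1,0) = (1,0)"
  shows "f (2,0) = (2,0) \<and> f (3,0) = (3,0) \<and> f (2,1) = (2,1)
       \<and> f (0,-2) = (0,-2) \<and> f (1,-2) = (1,-2) \<and> f (0,-1) = (0,-1)
       \<and> f (5,-1) = (5,-1) \<and> f (6,-1) = (6,-1) \<and> f (5,0) = (5,0)
       \<and> f (-3,-1) = (-3,-1) \<and> f (-2,-1) = (-2,-1) \<and> f (-3,0) = (-3,0)"
proof -
  note defs = up_tri_def down_tri_def hexagon_eq
  have T0: "f ` up_tri 1 (-1) = up_tri 1 (-1)" using h0 by (simp add: up_tri_def)
  have kT0: "up_tri 1 (-1) \<in> KF" by (rule upKF) (simp add: ty2_def)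
  have kD1: "down_tri 1 (-1) \<in> KF" by (rule downKF) (simp add: ty2_def)
  have kU2: "up_tri 2 0 \<in> KF" by (rule upKF) (simp add: ty2_def)
  have kD2: "down_tri 0 (-2) \<in> KF" by (rule downKF) (simp add: ty2_def)
  have kU3: "up_tri 0 (-2) \<in> KF" by (rule upKF) (simp add: ty2_def)
  have kU4: "up_tri 5 (-1) \<in> KF" by (rule upKF) (simp add: ty2_def)
  have kD3: "down_tri (-3) (-1) \<in> KF" by (rule downKF) (simp add: ty2_def)
  have kU5: "up_tri (-3) (-1) \<in> KF" by (rule upKF) (simp add: ty2_def)
  have s1: "f (2,0) = (2,0)"
    by (rule tri_step[OF f h0(2) h0(3) kT0 T0 _ _ _ kD1 _ fc1])
       (auto simp: defs)
  have D1: "f ` down_tri 1 (-1) = down_tri 1 (-1)" using h0 s1 by (simp add: down_tri_def)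
  have kH1: "hexagon (3,-1) \<in> KF" by (rule hexKF) (simp add: hex_center_def)
  have H1: "f ` hexagon (3,-1) = hexagon (3,-1)"
    by (rule hex_step[OF f s1 h0(2) kD1 D1 _ _ kH1 _ _ fc2, where z="(1,0)"]) (simp_all add: defs)
  have s2: "f (3,0) = (3,0)"
    by (rule hex_walk[OF f H1 h0(2) s1 _ _ _ wk1]) (simp_all add: defs KE_intro tri_adj_def)
  have s3: "f (2,1) = (2,1)"
    by (rule tri_step[OF f s1 s2 kH1 H1 _ _ _ kU2 _ fc3])
       (auto simp: defs)
  have kH0: "hexagon (0,0) \<in> KF" by (rule hexKF) (simp add: hex_center_def)
  have H0: "f ` hexagon (0,0) = hexagon (0,0)"
    by (rule hex_step[OF f h0(1) h0(3) kT0 T0 _ _ kH0 _ _ fc4, where z="(2,-1)"]) (simp_all add: defs)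
  have s4: "f (0,-1) = (0,-1)"
    by (rule hex_walk[OF f H0 h0(3) h0(1) _ _ _ wk5]) (simp_all add: defs KE_intro tri_adj_def)
  have s5: "f (1,-2) = (1,-2)"
    by (rule tri_step[OF f h0(1) s4 kH0 H0 _ _ _ kD2 _ fc5])
       (auto simp: defs)
  have D2: "f ` down_tri 0 (-2) = down_tri 0 (-2)" using h0 s4 s5 by (simp add: down_tri_def)
  have s6: "f (0,-2) = (0,-2)"
    by (rule tri_step[OF f s4 s5 kD2 D2 _ _ _ kU3 _ fc6])
       (auto simp: defs)
  have s7: "f (4,-1) = (4,-1)"
    by (rule hex_walk[OF f H1 s1 s2 _ _ _ wk2]) (simp_all add: defs KE_intro tri_adj_def)
  have kH2: "hexagon (4,0) \<in> KF" by (rule hexKF) (simp add: hex_center_def)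
  have H2: "f ` hexagon (4,0) = hexagon (4,0)"
    by (rule hex_step[OF f s2 s7 kH1 H1 _ _ kH2 _ _ fc7, where z="(2,0)"]) (simp_all add: defs)
  have s8: "f (5,-1) = (5,-1)"
    by (rule hex_walk[OF f H2 s2 s7 _ _ _ wk3]) (simp_all add: defs KE_intro tri_adj_def)
  have s9: "f (5,0) = (5,0)"
    by (rule hex_walk[OF f H2 s7 s8 _ _ _ wk4]) (simp_all add: defs KE_intro tri_adj_def)
  have s10: "f (6,-1) = (6,-1)"
    by (rule tri_step[OF f s8 s9 kH2 H2 _ _ _ kU4 _ fc8])
       (auto simp: defs)
  have s11: "f (-1,0) = (-1,0)"
    by (rule hex_walk[OF f H0 h0(1) s4 _ _ _ wk6]) (simp_all add: defs KE_intro tri_adj_def)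
  have kH3: "hexagon (-1,-1) \<in> KF" by (rule hexKF) (simp add: hex_center_def)
  have H3: "f ` hexagon (-1,-1) = hexagon (-1,-1)"
    by (rule hex_step[OF f s4 s11 kH0 H0 _ _ kH3 _ _ fc9, where z="(1,0)"]) (simp_all add: defs)
  have s12: "f (-2,0) = (-2,0)"
    by (rule hex_walk[OF f H3 s4 s11 _ _ _ wk7]) (simp_all add: defs KE_intro tri_adj_def)
  have s13: "f (-2,-1) = (-2,-1)"
    by (rule hex_walk[OF f H3 s11 s12 _ _ _ wk8]) (simp_all add: defs KE_intro tri_adj_def)
  have s14: "f (-3,0) = (-3,0)"
    by (rule tri_step[OF f s12 s13 kH3 H3 _ _ _ kD3 _ fc10])
       (auto simp: defs)
  have D3: "f ` down_tri (-3) (-1) = down_tri (-3) (-1)" using s12 s13 s14 by (simp add: down_tri_def)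
  have s15: "f (-3,-1) = (-3,-1)"
    by (rule tri_step[OF f s13 s14 kD3 D3 _ _ _ kU5 _ fc11])
       (auto simp: defs)
  show ?thesis using s1 s2 s3 s4 s5 s6 s8 s9 s10 s13 s14 s15 by simp
qed


definition fixat :: "(int \<times> int \<Rightarrow> int \<times> int) \<Rightarrow> int \<Rightarrow> int \<Rightarrow> bool" where
  "fixat f s1 s2 \<longleftrightarrow> f (1+s1, -1+s2) = (1+s1, -1+s2) \<and> f (2+s1, -1+s2) = (2+s1, -1+s2) \<and> f (1+s1, s2) = (1+s1, s2)"

lemma aut_comp: "f \<in> map_aut Ktiling \<Longrightarrow> g \<in> map_aut Ktiling \<Longrightarrow> f \<circ> g \<in> map_aut Ktiling"
  unfolding Ktiling_def by (rule map_aut_comp)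

lemma conj_eval:
  assumes f: "f \<in> map_aut Ktiling" and s: "hex_center (s1,s2)" and p: "(a,b) \<in> KV"
  shows "(tr (-s1,-s2) \<circ> f \<circ> tr (s1,s2)) (a,b) = (a,b) \<longleftrightarrow> f (a+s1,b+s2) = (a+s1,b+s2)"
proof -
  have q: "tr (s1,s2) (a,b) = (a+s1,b+s2)" using p by (simp add: tr_def)
  have qK: "(a+s1,b+s2) \<in> KV" using tr_KV[OF s p] q by simp
  have fq: "f (a+s1,b+s2) \<in> KV" using aut_KV[OF f qK] .
  obtain x y where xy: "f (a+s1,b+s2) = (x,y)" by (cases "f (a+s1,b+s2)")
  have "(tr (-s1,-s2) \<circ> f \<circ> tr (s1,s2)) (a,b) = (x - s1, y - s2)"
    using q fq xy by (simp add: tr_def)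
  then show ?thesis using xy by auto
qed

lemma fix_shift:
  assumes f: "f \<in> map_aut Ktiling" and s: "hex_center (s1,s2)" and fx: "fixat f s1 s2"
  shows "fixat f (s1+1) (s2+1) \<and> fixat f (s1-1) (s2-1) \<and> fixat f (s1+4) s2 \<and> fixat f (s1-4) s2"
proof -
  have s': "hex_center (-s1,-s2)" using s unfolding hex_center_def by simp presburger
  define g where "g = tr (-s1,-s2) \<circ> f \<circ> tr (s1,s2)"
  have g: "g \<in> map_aut Ktiling" unfolding g_def
    by (intro aut_comp tr_aut s s' f)
  have ev: "\<And>a b. (a,b) \<in> KV \<Longrightarrow> g (a,b) = (a,b) \<longleftrightarrow> f (a+s1,b+s2) = (a+s1,b+s2)"
    unfolding g_def using conj_eval[OF f s] by blast
  have h0: "g (1,-1) = (1,-1)" "g (2,-1) = (2,-1)" "g (1,0) = (1,0)"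
    using fx by (simp_all add: ev fixat_def algebra_simps)
  have r: "g (2,0) = (2,0) \<and> g (3,0) = (3,0) \<and> g (2,1) = (2,1)
       \<and> g (0,-2) = (0,-2) \<and> g (1,-2) = (1,-2) \<and> g (0,-1) = (0,-1)
       \<and> g (5,-1) = (5,-1) \<and> g (6,-1) = (6,-1) \<and> g (5,0) = (5,0)
       \<and> g (-3,-1) = (-3,-1) \<and> g (-2,-1) = (-2,-1) \<and> g (-3,0) = (-3,0)"
    by (rule rigid_step[OF g h0])
  then show ?thesis by (simp add: ev fixat_def algebra_simps)
qed

lemma fix_all:
  assumes f: "f \<in> map_aut Ktiling" and fx: "fixat f 0 0"
  shows "fixat f (4*n + m) m"
proof -
  have A: "fixat f (4*n) 0" for n :: int
  proof (induct n rule: int_induct[where k=0])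
    case base then show ?case using fx by simp
  next
    case (step1 i)
    have "hex_center (4*i, 0)" by (simp add: hex_center_def)
    then have "fixat f (4*i+4) 0" using fix_shift[OF f _ step1(2)] by blast
    then show ?case by (simp add: algebra_simps)
  next
    case (step2 i)
    have "hex_center (4*i, 0)" by (simp add: hex_center_def)
    then have "fixat f (4*i-4) 0" using fix_shift[OF f _ step2(2)] by blast
    then show ?case by (simp add: algebra_simps)
  qed
  show ?thesis
  proof (induct m rule: int_induct[where k=0])
    case base then show ?case using A by simp
  next
    case (step1 i)
    have "hex_center (4*n+i, i)" by (simp add: hex_center_def)
    then have "fixat f (4*n+i+1) (i+1)" using fix_shift[OF f _ step1(2)] by blast
    then show ?case by (simp add: algebra_simps)
  next
    case (step2 i)
    have "hex_center (4*n+i, i)" by (simp add: hex_center_def)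
    then have "fixat f (4*n+i-1) (i-1)" using fix_shift[OF f _ step2(2)] by blast
    then show ?case by (simp add: algebra_simps)
  qed
qed

lemma rigid:
  assumes f: "f \<in> map_aut Ktiling" and fx: "f (1,-1) = (1,-1)" "f (2,-1) = (2,-1)" "f (1,0) = (1,0)"
    and p: "p \<in> KV"
  shows "f p = p"
proof -
  have F0: "fixat f 0 0" using fx by (simp add: fixat_def)
  obtain a b where ab: "p = (a,b)" by (cases p)
  have k: "(a - b) mod 4 = 1 \<or> (a - b) mod 4 = 2 \<or> (a - b) mod 4 = 3" using p ab by simp presburger
  have gen: "\<And>s1 s2. (s1 - s2) mod 4 = 0 \<Longrightarrow> fixat f s1 s2"
  proof -
    fix s1 s2 :: int assume "(s1 - s2) mod 4 = 0"
    then have e: "s1 = 4 * ((s1 - s2) div 4) + s2" by presburger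
    have "fixat f (4 * ((s1 - s2) div 4) + s2) s2" by (rule fix_all[OF f F0])
    then show "fixat f s1 s2" using e by simp
  qed
  from k show ?thesis
  proof (elim disjE)
    assume "(a - b) mod 4 = 1"
    then have "((a - 1) - b) mod 4 = 0" by presburger
    then have "fixat f (a-1) b" by (rule gen)
    then show ?thesis using ab by (simp add: fixat_def)
  next
    assume "(a - b) mod 4 = 2"
    then have "((a - 1) - (b + 1)) mod 4 = 0" by presburger
    then have "fixat f (a-1) (b+1)" by (rule gen)
    then show ?thesis using ab by (simp add: fixat_def)
  next
    assume "(a - b) mod 4 = 3"
    then have "((a - 2) - (b + 1)) mod 4 = 0" by presburger
    then have "fixat f (a-2) (b+1)" by (rule gen)
    then show ?thesis using ab by (simp add: fixat_def)
  qed
qed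


lemma T0_eq: "up_tri 1 (-1) = {(1,-1),(2,-1),(1,0)}" by (simp add: up_tri_def)

lemma T0_KF: "{(1,-1),(2,-1),(1,0)} \<in> KF"
  using upKF[of 1 "-1"] by (simp add: ty2_def up_tri_def)

lemma orient_T0: "orient (1,-1) (2,-1) (1,0) > 0" by (simp add: orient_def)

lemma classify_pre:
  assumes g: "g \<in> map_aut Ktiling" and op: "orientation_preserving g"
  shows "\<exists>t1 t2. hex_center (t1,t2) \<and>
    ((g (1,-1) = (1+t1,-1+t2) \<and> g (2,-1) = (2+t1,-1+t2) \<and> g (1,0) = (1+t1,t2)) \<or>
     (g (1,-1) = (t1-1,t2+1) \<and> g (2,-1) = (t1-2,t2+1) \<and> g (1,0) = (t1-1,t2)))"
proof -
  have inj: "inj g" using aut_inj[OF g] .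
  have KT: "g ` {(1,-1),(2,-1),(1,0)} \<in> KF" using aut_KF[OF g T0_KF] .
  have "inj_on g {(1,-1),(2,-1),(1,0)}" using inj by (rule inj_on_subset) simp
  then have "card (g ` {(1,-1),(2,-1),(1,0)}) = card {(1::int,-1::int),(2,-1),(1,0)}" by (rule card_image)
  then have cT: "card (g ` {(1,-1),(2,-1),(1,0)}) = 3" by simp
  obtain a b where ab: "ty2 (a,b)" "g ` {(1,-1),(2,-1),(1,0)} = up_tri a b \<or> g ` {(1,-1),(2,-1),(1,0)} = down_tri a b"
    using KF_card3[OF KT cT] by blast
  have t: "(a - b) mod 4 = 2" using ab(1) by (simp add: ty2_def)
  have y0: "ty2 (1::int,-1::int)" by (simp add: ty2_def)
  have y1: "(1::int,-1::int) \<in> KV" by simp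
  have y: "ty2 (g (1,-1))" by (rule aut_ty2[OF g y1 y0])
  have o: "orient (g (1,-1)) (g (2,-1)) (g (1,0)) > 0"
  proof -
    have c3: "card {(1::int,-1::int),(2,-1),(1,0)} = 3" by simp
    have pre: "{(1::int,-1::int),(2,-1),(1,0)} \<in> KF \<and> card {(1::int,-1::int),(2,-1),(1,0)} = 3 \<and> orient (1,-1) (2,-1) (1,0) > 0"
      using T0_KF c3 orient_T0 by simp
    have "\<forall>p q r. {p, q, r} \<in> KF \<and> card {p, q, r} = 3 \<and> orient p q r > 0
        \<longrightarrow> orient (g p) (g q) (g r) > 0" using op unfolding orientation_preserving_def .
    then show ?thesis using pre by blast
  qed
  have d1: "g (1,-1) \<noteq> g (2,-1)" "g (1,-1) \<noteq> g (1,0)" "g (2,-1) \<noteq> g (1,0)"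
    using inj by (simp_all add: inj_eq)
  from ab(2) show ?thesis
  proof
    assume u: "g ` {(1,-1),(2,-1),(1,0)} = up_tri a b"
    have m: "g (1,-1) \<in> up_tri a b" "g (2,-1) \<in> up_tri a b" "g (1,0) \<in> up_tri a b" unfolding u[symmetric] by simp_all
    have ne1a: "\<not> ty2 (a+1,b)" using t unfolding ty2_def by simp presburger
    have ne1b: "\<not> ty2 (a,b+1)" using t unfolding ty2_def by simp presburger
    note ne1 = ne1a ne1b
    have e1: "g (1,-1) = (a,b)" using m(1) y ne1 by (auto simp: up_tri_def)
    have "(g (2,-1) = (a+1,b) \<and> g (1,0) = (a,b+1)) \<or> (g (2,-1) = (a,b+1) \<and> g (1,0) = (a+1,b))"
      using m(2,3) d1 e1 by (auto simp: up_tri_def)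
    moreover have "\<not> (g (2,-1) = (a,b+1) \<and> g (1,0) = (a+1,b))"
      using o e1 by (auto simp: orient_def)
    ultimately have e2: "g (2,-1) = (a+1,b)" "g (1,0) = (a,b+1)" by auto
    have "hex_center (a-1,b+1)" using t by (simp add: hex_center_def; presburger)
    then show ?thesis using e1 e2 by (intro exI[of _ "a-1"] exI[of _ "b+1"]) simp
  next
    assume u: "g ` {(1,-1),(2,-1),(1,0)} = down_tri a b"
    have m: "g (1,-1) \<in> down_tri a b" "g (2,-1) \<in> down_tri a b" "g (1,0) \<in> down_tri a b" unfolding u[symmetric] by simp_all
    have ne1a: "\<not> ty2 (a+1,b)" using t unfolding ty2_def by simp presburger
    have ne1b: "\<not> ty2 (a,b+1)" using t unfolding ty2_def by simp presburger
    note ne1 = ne1a ne1b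
    have e1: "g (1,-1) = (a+1,b+1)" using m(1) y ne1 by (auto simp: down_tri_def)
    have "(g (2,-1) = (a+1,b) \<and> g (1,0) = (a,b+1)) \<or> (g (2,-1) = (a,b+1) \<and> g (1,0) = (a+1,b))"
      using m(2,3) d1 e1 by (auto simp: down_tri_def)
    moreover have "\<not> (g (2,-1) = (a+1,b) \<and> g (1,0) = (a,b+1))"
      using o e1 by (auto simp: orient_def)
    ultimately have e2: "g (2,-1) = (a,b+1)" "g (1,0) = (a+1,b)" by auto
    have "hex_center (a+2,b)" using t by (simp add: hex_center_def; presburger)
    then show ?thesis using e1 e2 by (intro exI[of _ "a+2"] exI[of _ "b"]) simp
  qed
qed


lemma tr_apply: "p \<in> KV \<Longrightarrow> tr (t1,t2) p = (fst p + t1, snd p + t2)" by (simp add: tr_def)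
lemma rho_apply: "p \<in> KV \<Longrightarrow> rho (t1,t2) p = (t1 - fst p, t2 - snd p)" by (simp add: rho_def)

lemma classify:
  assumes g: "g \<in> map_aut Ktiling" and op: "orientation_preserving g"
    and free: "g \<noteq> id \<longrightarrow> (\<forall>v\<in>KV. g v \<noteq> v) \<and> (\<forall>e\<in>KE. g ` e \<noteq> e) \<and> (\<forall>f\<in>KF. g ` f \<noteq> f)"
  shows "\<exists>t1 t2. hex_center (t1,t2) \<and> (\<forall>p\<in>KV. g p = (fst p + t1, snd p + t2))"
proof -
  obtain t1 t2 where t: "hex_center (t1,t2)" and c:
    "(g (1,-1) = (1+t1,-1+t2) \<and> g (2,-1) = (2+t1,-1+t2) \<and> g (1,0) = (1+t1,t2)) \<or>
     (g (1,-1) = (t1-1,t2+1) \<and> g (2,-1) = (t1-2,t2+1) \<and> g (1,0) = (t1-1,t2))"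
    using classify_pre[OF g op] by blast
  have gK: "\<And>p. p \<in> KV \<Longrightarrow> g p \<in> KV" using aut_KV[OF g] .
  have k1: "(1::int,-1::int) \<in> KV" "(2::int,-1::int) \<in> KV" "(1::int,0::int) \<in> KV" by simp_all
  from c show ?thesis
  proof
    assume e: "g (1,-1) = (1+t1,-1+t2) \<and> g (2,-1) = (2+t1,-1+t2) \<and> g (1,0) = (1+t1,t2)"
    have t': "hex_center (-t1,-t2)" using t unfolding hex_center_def by simp presburger
    define f where "f = tr (-t1,-t2) \<circ> g"
    have f: "f \<in> map_aut Ktiling" unfolding f_def by (intro aut_comp tr_aut t' g)
    have fe: "\<And>p. p \<in> KV \<Longrightarrow> f p = (fst (g p) - t1, snd (g p) - t2)"
      unfolding f_def using gK by (simp add: tr_apply)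
    have "f (1,-1) = (1,-1)" "f (2,-1) = (2,-1)" "f (1,0) = (1,0)"
      using e k1 by (simp_all add: fe)
    then have "\<forall>p\<in>KV. f p = p" using rigid[OF f] by blast
    then have "\<forall>p\<in>KV. g p = (fst p + t1, snd p + t2)" using fe by (auto simp: prod_eq_iff)
    then show ?thesis using t by blast
  next
    assume e: "g (1,-1) = (t1-1,t2+1) \<and> g (2,-1) = (t1-2,t2+1) \<and> g (1,0) = (t1-1,t2)"
    define f where "f = rho (t1,t2) \<circ> g"
    have f: "f \<in> map_aut Ktiling" unfolding f_def by (intro aut_comp rho_aut t g)
    have fe: "\<And>p. p \<in> KV \<Longrightarrow> f p = (t1 - fst (g p), t2 - snd (g p))"
      unfolding f_def using gK by (simp add: rho_apply)
    have "f (1,-1) = (1,-1)" "f (2,-1) = (2,-1)" "f (1,0) = (1,0)"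
      using e k1 by (simp_all add: fe)
    then have "\<forall>p\<in>KV. f p = p" using rigid[OF f] by blast
    then have gr: "\<forall>p\<in>KV. g p = (t1 - fst p, t2 - snd p)" using fe by (auto simp: prod_eq_iff)
    have "g \<noteq> id"
    proof
      assume "g = id"
      then have "(1::int,-1::int) = (t1-1,t2+1)" "(2::int,-1::int) = (t1-2,t2+1)" using e by auto
      then show False by simp
    qed
    then have nf: "\<forall>v\<in>KV. g v \<noteq> v" "\<forall>e\<in>KE. g ` e \<noteq> e" "\<forall>f\<in>KF. g ` f \<noteq> f" using free by auto
    have tm: "(t1 - t2) mod 4 = 0" using t by (simp add: hex_center_def)
    show ?thesis
    proof (cases "even t1")
      case True
      then have "even t2" using tm by presburger
      then obtain u v where uv: "t1 = 2*u" "t2 = 2*v" using True by (meson evenE)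
      show ?thesis
      proof (cases "(u,v) \<in> KV")
        case True
        then have "g (u,v) = (u,v)" using gr uv by simp
        then show ?thesis using nf(1) True by blast
      next
        case False
        then have hc: "hex_center (u,v)" by (simp add: hex_center_def)
        have sub: "hexagon (u,v) \<subseteq> KV" using hc hex_sub_KV by (simp add: hex_center_def)
        have "g ` hexagon (u,v) = (\<lambda>p. (t1 - fst p, t2 - snd p)) ` hexagon (u,v)"
          using gr sub by (intro image_cong) auto
        also have "\<dots> = hexagon (u,v)" unfolding uv hexagon_eq by (auto simp: algebra_simps)
        finally show ?thesis using nf(3) hexKF[OF hc] by blast
      qed
    next
      case False
      then have "odd t2" using tm by presburger
      then obtain u v where uv: "t1 = 2*u+1" "t2 = 2*v+1" using False by (meson oddE)
      have uvm: "(u - v) mod 2 = 0" using tm uv by presburger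
      have pK: "(u+1,v) \<in> KV" "(u,v+1) \<in> KV" using uvm by (simp_all, presburger+)
      have e1: "{(u+1,v),(u,v+1)} \<in> KE" using pK by (intro KE_intro) (simp_all add: tri_adj_def)
      have "g ` {(u+1,v),(u,v+1)} = {(u,v+1),(u+1,v)}" using gr pK uv by (simp add: algebra_simps)
      then have "g ` {(u+1,v),(u,v+1)} = {(u+1,v),(u,v+1)}" by (simp add: insert_commute)
      then show ?thesis using nf(2) e1 by blast
    qed
  qed
qed


definition padd :: "int \<times> int \<Rightarrow> int \<times> int \<Rightarrow> int \<times> int" where
  "padd p t = (fst p + fst t, snd p + snd t)"

definition Lam :: "(int \<times> int \<Rightarrow> int \<times> int) set \<Rightarrow> (int \<times> int) set" where
  "Lam \<Gamma> = {t. hex_center t \<and> (\<exists>g\<in>\<Gamma>. \<forall>p\<in>KV. g p = padd p t)}"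

lemma padd_KV: "p \<in> KV \<Longrightarrow> hex_center t \<Longrightarrow> padd p t \<in> KV"
  by (cases p, cases t) (simp add: padd_def hex_center_def, presburger)

context
  fixes \<Gamma> :: "(int \<times> int \<Rightarrow> int \<times> int) set"
  assumes sg: "is_subgroup_aut \<Gamma>" and fr: "acts_freely \<Gamma>" and tor: "quotient_is_torus \<Gamma>"
begin

lemma G_aut: "g \<in> \<Gamma> \<Longrightarrow> g \<in> map_aut Ktiling"
  using sg unfolding is_subgroup_aut_def by blast

lemma G_trans: assumes "g \<in> \<Gamma>" shows "\<exists>t\<in>Lam \<Gamma>. \<forall>p\<in>KV. g p = padd p t"
proof -
  have op: "orientation_preserving g" using tor assms unfolding quotient_is_torus_def by blast
  have free: "g \<noteq> id \<longrightarrow> (\<forall>v\<in>KV. g v \<noteq> v) \<and> (\<forall>e\<in>KE. g ` e \<noteq> e) \<and> (\<forall>f\<in>KF. g ` f \<noteq> f)"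
    using fr assms unfolding acts_freely_def by blast
  obtain t1 t2 where t: "hex_center (t1,t2)" "\<forall>p\<in>KV. g p = (fst p + t1, snd p + t2)"
    using classify[OF G_aut[OF assms] op free] by blast
  have tp: "\<forall>p\<in>KV. g p = padd p (t1,t2)" using t(2) by (simp add: padd_def)
  then have "(t1,t2) \<in> Lam \<Gamma>" using assms t(1) unfolding Lam_def by blast
  then show ?thesis using tp by blast
qed

lemma Lam_L: "t \<in> Lam \<Gamma> \<Longrightarrow> hex_center t" by (simp add: Lam_def)

lemma Lam_zero: "(0,0) \<in> Lam \<Gamma>"
proof -
  have "id \<in> \<Gamma>" using sg unfolding is_subgroup_aut_def by blast
  moreover have "\<forall>p\<in>KV. id p = padd p (0,0)" by (simp add: padd_def)
  moreover have "hex_center (0,0)" by (simp add: hex_center_def)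
  ultimately show ?thesis unfolding Lam_def by blast
qed

lemma Lam_neg: assumes "t \<in> Lam \<Gamma>" shows "(- fst t, - snd t) \<in> Lam \<Gamma>"
proof -
  obtain g where g: "g \<in> \<Gamma>" "\<forall>p\<in>KV. g p = padd p t" and hc: "hex_center t"
    using assms unfolding Lam_def by blast
  have ig: "inv g \<in> \<Gamma>" using sg g(1) unfolding is_subgroup_aut_def by blast
  have inj: "inj g" using aut_inj[OF G_aut[OF g(1)]] .
  have hc': "hex_center (- fst t, - snd t)" using hc by (cases t) (simp add: hex_center_def, presburger)
  have "\<forall>p\<in>KV. inv g p = padd p (- fst t, - snd t)"
  proof
    fix p assume p: "p \<in> KV"
    have q: "padd p (- fst t, - snd t) \<in> KV" using padd_KV[OF p hc'] .
    have "g (padd p (- fst t, - snd t)) = p" using g(2) q by (simp add: padd_def)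
    then show "inv g p = padd p (- fst t, - snd t)" using inv_f_f[OF inj] by metis
  qed
  then show ?thesis using ig hc' unfolding Lam_def by blast
qed

lemma Lam_add: assumes "s \<in> Lam \<Gamma>" "t \<in> Lam \<Gamma>" shows "padd s t \<in> Lam \<Gamma>"
proof -
  obtain g where g: "g \<in> \<Gamma>" "\<forall>p\<in>KV. g p = padd p s" and hs: "hex_center s"
    using assms(1) unfolding Lam_def by blast
  obtain h where h: "h \<in> \<Gamma>" "\<forall>p\<in>KV. h p = padd p t" and ht: "hex_center t"
    using assms(2) unfolding Lam_def by blast
  have gh: "g \<circ> h \<in> \<Gamma>" using sg g(1) h(1) unfolding is_subgroup_aut_def by blast
  have hc: "hex_center (padd s t)" using hs ht by (cases s, cases t) (simp add: hex_center_def padd_def, presburger)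
  have "\<forall>p\<in>KV. (g \<circ> h) p = padd p (padd s t)"
  proof
    fix p assume p: "p \<in> KV"
    have "h p \<in> KV" using h(2) p padd_KV[OF p ht] by simp
    then show "(g \<circ> h) p = padd p (padd s t)" using g(2) h(2) p by (simp add: padd_def algebra_simps)
  qed
  then show ?thesis using gh hc unfolding Lam_def by blast
qed

lemma orbit_eq: "p \<in> KV \<Longrightarrow> aut_orbit \<Gamma> p = (\<lambda>t. padd p t) ` Lam \<Gamma>"
proof -
  assume p: "p \<in> KV"
  show ?thesis
  proof
    show "aut_orbit \<Gamma> p \<subseteq> (\<lambda>t. padd p t) ` Lam \<Gamma>"
    proof
      fix x assume "x \<in> aut_orbit \<Gamma> p"
      then obtain g where g: "g \<in> \<Gamma>" "x = g p" unfolding aut_orbit_def by blast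
      obtain t where "t \<in> Lam \<Gamma>" "\<forall>p\<in>KV. g p = padd p t" using G_trans[OF g(1)] by blast
      then show "x \<in> (\<lambda>t. padd p t) ` Lam \<Gamma>" using g(2) p by auto
    qed
    show "(\<lambda>t. padd p t) ` Lam \<Gamma> \<subseteq> aut_orbit \<Gamma> p"
    proof
      fix x assume "x \<in> (\<lambda>t. padd p t) ` Lam \<Gamma>"
      then obtain t where t: "t \<in> Lam \<Gamma>" "x = padd p t" by blast
      then obtain g where g: "g \<in> \<Gamma>" "\<forall>p\<in>KV. g p = padd p t" unfolding Lam_def by blast
      then have "x = g p" using t(2) p by simp
      then show "x \<in> aut_orbit \<Gamma> p" unfolding aut_orbit_def using g(1) by (rule image_eqI)
    qed
  qed
qed

lemma orbit_eq_iff: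
  assumes p: "p \<in> KV" and q: "q \<in> KV"
  shows "aut_orbit \<Gamma> p = aut_orbit \<Gamma> q \<longleftrightarrow> (fst q - fst p, snd q - snd p) \<in> Lam \<Gamma>"
proof
  assume "aut_orbit \<Gamma> p = aut_orbit \<Gamma> q"
  moreover have "q \<in> aut_orbit \<Gamma> q" using orbit_eq[OF q] Lam_zero by (force simp: padd_def)
  ultimately have "q \<in> (\<lambda>t. padd p t) ` Lam \<Gamma>" using orbit_eq[OF p] by simp
  then obtain t where "t \<in> Lam \<Gamma>" "q = padd p t" by blast
  then show "(fst q - fst p, snd q - snd p) \<in> Lam \<Gamma>" by (simp add: padd_def)
next
  assume d: "(fst q - fst p, snd q - snd p) \<in> Lam \<Gamma>"
  let ?d = "(fst q - fst p, snd q - snd p)"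
  have "(\<lambda>t. padd p t) ` Lam \<Gamma> = (\<lambda>t. padd q t) ` Lam \<Gamma>"
  proof
    show "(\<lambda>t. padd p t) ` Lam \<Gamma> \<subseteq> (\<lambda>t. padd q t) ` Lam \<Gamma>"
    proof
      fix x assume "x \<in> (\<lambda>t. padd p t) ` Lam \<Gamma>"
      then obtain t where t: "t \<in> Lam \<Gamma>" "x = padd p t" by blast
      have "padd (- fst ?d, - snd ?d) t \<in> Lam \<Gamma>" using Lam_add[OF Lam_neg[OF d] t(1)] .
      moreover have "x = padd q (padd (- fst ?d, - snd ?d) t)" using t(2) by (simp add: padd_def)
      ultimately show "x \<in> (\<lambda>t. padd q t) ` Lam \<Gamma>" by blast
    qed
    show "(\<lambda>t. padd q t) ` Lam \<Gamma> \<subseteq> (\<lambda>t. padd p t) ` Lam \<Gamma>"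
    proof
      fix x assume "x \<in> (\<lambda>t. padd q t) ` Lam \<Gamma>"
      then obtain t where t: "t \<in> Lam \<Gamma>" "x = padd q t" by blast
      have "padd ?d t \<in> Lam \<Gamma>" using Lam_add[OF d t(1)] .
      moreover have "x = padd p (padd ?d t)" using t(2) by (simp add: padd_def)
      ultimately show "x \<in> (\<lambda>t. padd p t) ` Lam \<Gamma>" by blast
    qed
  qed
  then show "aut_orbit \<Gamma> p = aut_orbit \<Gamma> q" using orbit_eq[OF p] orbit_eq[OF q] by simp
qed

end


definition Phi :: "(int \<times> int \<Rightarrow> int \<times> int) set \<Rightarrow> (int \<times> int \<Rightarrow> int \<times> int) \<Rightarrow> (int \<times> int) set \<Rightarrow> (int \<times> int) set" where
  "Phi \<Gamma> \<phi> X = (if X \<in> quotV \<Gamma> then \<phi> ` X else X)"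

lemma quotV_orbit: "p \<in> KV \<Longrightarrow> aut_orbit \<Gamma> p \<in> quotV \<Gamma>" by (simp add: quotV_def)

lemma descend:
  assumes ph: "\<phi> \<in> map_aut Ktiling" and ps: "\<psi> \<in> map_aut Ktiling"
    and inv1: "\<And>p. \<psi> (\<phi> p) = p" and inv2: "\<And>p. \<phi> (\<psi> p) = p"
    and c1: "\<And>p. p \<in> KV \<Longrightarrow> \<phi> ` aut_orbit \<Gamma> p = aut_orbit \<Gamma> (\<phi> p)"
    and c2: "\<And>p. p \<in> KV \<Longrightarrow> \<psi> ` aut_orbit \<Gamma> p = aut_orbit \<Gamma> (\<psi> p)"
  shows "Phi \<Gamma> \<phi> \<in> map_aut (quot_map \<Gamma>)"
proof -
  have P1: "\<And>p. p \<in> KV \<Longrightarrow> Phi \<Gamma> \<phi> (aut_orbit \<Gamma> p) = aut_orbit \<Gamma> (\<phi> p)"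
    using c1 quotV_orbit by (simp add: Phi_def)
  have P2: "\<And>p. p \<in> KV \<Longrightarrow> Phi \<Gamma> \<psi> (aut_orbit \<Gamma> p) = aut_orbit \<Gamma> (\<psi> p)"
    using c2 quotV_orbit by (simp add: Phi_def)
  have K1: "\<And>p. p \<in> KV \<Longrightarrow> \<phi> p \<in> KV" using aut_KV[OF ph] .
  have K2: "\<And>p. p \<in> KV \<Longrightarrow> \<psi> p \<in> KV" using aut_KV[OF ps] .
  have S1: "\<And>e. e \<subseteq> KV \<Longrightarrow> Phi \<Gamma> \<phi> ` (aut_orbit \<Gamma> ` e) = aut_orbit \<Gamma> ` (\<phi> ` e)"
  proof -
    fix e assume "e \<subseteq> KV"
    then have "Phi \<Gamma> \<phi> ` (aut_orbit \<Gamma> ` e) = (\<lambda>p. aut_orbit \<Gamma> (\<phi> p)) ` e"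
      unfolding image_image using P1 by (intro image_cong) auto
    then show "Phi \<Gamma> \<phi> ` (aut_orbit \<Gamma> ` e) = aut_orbit \<Gamma> ` (\<phi> ` e)" by (simp add: image_image)
  qed
  have S2: "\<And>e. e \<subseteq> KV \<Longrightarrow> Phi \<Gamma> \<psi> ` (aut_orbit \<Gamma> ` e) = aut_orbit \<Gamma> ` (\<psi> ` e)"
  proof -
    fix e assume "e \<subseteq> KV"
    then have "Phi \<Gamma> \<psi> ` (aut_orbit \<Gamma> ` e) = (\<lambda>p. aut_orbit \<Gamma> (\<psi> p)) ` e"
      unfolding image_image using P2 by (intro image_cong) auto
    then show "Phi \<Gamma> \<psi> ` (aut_orbit \<Gamma> ` e) = aut_orbit \<Gamma> ` (\<psi> ` e)" by (simp add: image_image)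
  qed
  show ?thesis unfolding quot_map_def
  proof (rule map_aut_by_inverse[where g="Phi \<Gamma> \<psi>"])
    fix x assume "x \<in> quotV \<Gamma>"
    then obtain p where p: "p \<in> KV" "x = aut_orbit \<Gamma> p" by (auto simp: quotV_def)
    show "Phi \<Gamma> \<phi> x \<in> quotV \<Gamma>" using p P1 K1 quotV_orbit by simp
    show "Phi \<Gamma> \<psi> x \<in> quotV \<Gamma>" using p P2 K2 quotV_orbit by simp
  next
    fix x show "Phi \<Gamma> \<phi> (Phi \<Gamma> \<psi> x) = x"
    proof (cases "x \<in> quotV \<Gamma>")
      case True
      then obtain p where p: "p \<in> KV" "x = aut_orbit \<Gamma> p" by (auto simp: quotV_def)
      then show ?thesis using P1 P2 K2 inv2 by simp
    qed (simp add: Phi_def)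
  next
    fix x show "Phi \<Gamma> \<psi> (Phi \<Gamma> \<phi> x) = x"
    proof (cases "x \<in> quotV \<Gamma>")
      case True
      then obtain p where p: "p \<in> KV" "x = aut_orbit \<Gamma> p" by (auto simp: quotV_def)
      then show ?thesis using P1 P2 K1 inv1 by simp
    qed (simp add: Phi_def)
  next
    fix x assume "x \<notin> quotV \<Gamma>" then show "Phi \<Gamma> \<phi> x = x" by (simp add: Phi_def)
  next
    fix s assume "s \<in> quotE \<Gamma>"
    then obtain e where e: "e \<in> KE" "s = aut_orbit \<Gamma> ` e" by (auto simp: quotE_def)
    have sub: "e \<subseteq> KV" using KE_sub[OF e(1)] .
    show "Phi \<Gamma> \<phi> ` s \<in> quotE \<Gamma>" using S1[OF sub] e aut_KE[OF ph e(1)] by (simp add: quotE_def)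
    show "Phi \<Gamma> \<psi> ` s \<in> quotE \<Gamma>" using S2[OF sub] e aut_KE[OF ps e(1)] by (simp add: quotE_def)
  next
    fix s assume "s \<in> quotF \<Gamma>"
    then obtain e where e: "e \<in> KF" "s = aut_orbit \<Gamma> ` e" by (auto simp: quotF_def)
    have sub: "e \<subseteq> KV" using KF_sub[OF e(1)] .
    show "Phi \<Gamma> \<phi> ` s \<in> quotF \<Gamma>" using S1[OF sub] e aut_KF[OF ph e(1)] by (simp add: quotF_def)
    show "Phi \<Gamma> \<psi> ` s \<in> quotF \<Gamma>" using S2[OF sub] e aut_KF[OF ps e(1)] by (simp add: quotF_def)
  qed
qed

context
  fixes \<Gamma> :: "(int \<times> int \<Rightarrow> int \<times> int) set"
  assumes sg: "is_subgroup_aut \<Gamma>" and fr: "acts_freely \<Gamma>" and tor: "quotient_is_torus \<Gamma>"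
begin

lemma tr_compat:
  assumes t: "hex_center (t1,t2)" and p: "p \<in> KV"
  shows "tr (t1,t2) ` aut_orbit \<Gamma> p = aut_orbit \<Gamma> (tr (t1,t2) p)"
proof -
  have LL: "\<And>s. s \<in> Lam \<Gamma> \<Longrightarrow> hex_center s" using Lam_L[OF sg fr tor] .
  have q: "tr (t1,t2) p = padd p (t1,t2)" using p by (simp add: tr_def padd_def)
  have qK: "padd p (t1,t2) \<in> KV" using padd_KV[OF p t] .
  have "tr (t1,t2) ` aut_orbit \<Gamma> p = tr (t1,t2) ` (\<lambda>s. padd p s) ` Lam \<Gamma>"
    using orbit_eq[OF sg fr tor p] by simp
  also have "\<dots> = (\<lambda>s. padd (padd p (t1,t2)) s) ` Lam \<Gamma>"
    unfolding image_image
  proof (intro image_cong refl)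
    fix s assume "s \<in> Lam \<Gamma>"
    then have "padd p s \<in> KV" using padd_KV[OF p LL] by blast
    then show "tr (t1,t2) (padd p s) = padd (padd p (t1,t2)) s" by (simp add: tr_def padd_def algebra_simps)
  qed
  also have "\<dots> = aut_orbit \<Gamma> (tr (t1,t2) p)" using orbit_eq[OF sg fr tor qK] q by simp
  finally show ?thesis .
qed

lemma Lam_neg_image: "(\<lambda>s. (- fst s, - snd s)) ` Lam \<Gamma> = Lam \<Gamma>"
proof
  show "(\<lambda>s. (- fst s, - snd s)) ` Lam \<Gamma> \<subseteq> Lam \<Gamma>" using Lam_neg[OF sg fr tor] by blast
  show "Lam \<Gamma> \<subseteq> (\<lambda>s. (- fst s, - snd s)) ` Lam \<Gamma>"
  proof
    fix s assume "s \<in> Lam \<Gamma>"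
    then have "(- fst s, - snd s) \<in> Lam \<Gamma>" using Lam_neg[OF sg fr tor] by blast
    moreover have "s = (- fst (- fst s, - snd s), - snd (- fst s, - snd s))" by simp
    ultimately show "s \<in> (\<lambda>s. (- fst s, - snd s)) ` Lam \<Gamma>" by (rule rev_image_eqI)
  qed
qed

lemma rho_compat:
  assumes p: "p \<in> KV"
  shows "rho (0,0) ` aut_orbit \<Gamma> p = aut_orbit \<Gamma> (rho (0,0) p)"
proof -
  have LL: "\<And>s. s \<in> Lam \<Gamma> \<Longrightarrow> hex_center s" using Lam_L[OF sg fr tor] .
  have h0: "hex_center (0,0)" by (simp add: hex_center_def)
  have q: "rho (0,0) p = (- fst p, - snd p)" using p by (simp add: rho_def)
  have qK: "(- fst p, - snd p) \<in> KV" using rho_KV[OF h0 p] q by simp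
  have "rho (0,0) ` aut_orbit \<Gamma> p = rho (0,0) ` (\<lambda>s. padd p s) ` Lam \<Gamma>"
    using orbit_eq[OF sg fr tor p] by simp
  also have "\<dots> = (\<lambda>s. padd (- fst p, - snd p) s) ` ((\<lambda>s. (- fst s, - snd s)) ` Lam \<Gamma>)"
    unfolding image_image
  proof (intro image_cong refl)
    fix s assume "s \<in> Lam \<Gamma>"
    then have "padd p s \<in> KV" using padd_KV[OF p LL] by blast
    then show "rho (0,0) (padd p s) = padd (- fst p, - snd p) (- fst s, - snd s)" by (simp add: rho_def padd_def)
  qed
  also have "\<dots> = aut_orbit \<Gamma> (rho (0,0) p)" using orbit_eq[OF sg fr tor qK] q Lam_neg_image by simp
  finally show ?thesis .
qed

lemma tr_desc: assumes t: "hex_center (t1,t2)" shows "Phi \<Gamma> (tr (t1,t2)) \<in> map_aut (quot_map \<Gamma>)"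
proof -
  have t': "hex_center (-t1,-t2)" using t unfolding hex_center_def by simp presburger
  show ?thesis
    by (rule descend[OF tr_aut[OF t] tr_aut[OF t'] tr_inv'[OF t] tr_inv[OF t] tr_compat[OF t] tr_compat[OF t']])
qed

lemma tr_desc_inv: assumes t: "hex_center (t1,t2)" and p: "p \<in> KV"
  shows "Phi \<Gamma> (tr (-t1,-t2)) (Phi \<Gamma> (tr (t1,t2)) (aut_orbit \<Gamma> p)) = aut_orbit \<Gamma> p"
proof -
  have t': "hex_center (-t1,-t2)" using t unfolding hex_center_def by simp presburger
  have q: "tr (t1,t2) p \<in> KV" using tr_KV[OF t p] .
  show ?thesis using tr_compat[OF t p] tr_compat[OF t' q] quotV_orbit[OF p] quotV_orbit[OF q] tr_inv'[OF t]
    by (simp add: Phi_def)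
qed

lemma rho_desc: "Phi \<Gamma> (rho (0,0)) \<in> map_aut (quot_map \<Gamma>)"
proof -
  have h0: "hex_center (0,0)" by (simp add: hex_center_def)
  show ?thesis
    by (rule descend[OF rho_aut[OF h0] rho_aut[OF h0] rho_inv[OF h0] rho_inv[OF h0] rho_compat rho_compat])
qed

lemma rho_desc_inv: assumes p: "p \<in> KV"
  shows "Phi \<Gamma> (rho (0,0)) (Phi \<Gamma> (rho (0,0)) (aut_orbit \<Gamma> p)) = aut_orbit \<Gamma> p"
proof -
  have h0: "hex_center (0,0)" by (simp add: hex_center_def)
  have q: "rho (0,0) p \<in> KV" using rho_KV[OF h0 p] .
  show ?thesis using rho_compat[OF p] rho_compat[OF q] quotV_orbit[OF p] quotV_orbit[OF q] rho_inv[OF h0]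
    by (simp add: Phi_def)
qed

end


lemma unit_notL: "tri_adj p q \<Longrightarrow> \<not> hex_center (fst q - fst p, snd q - snd p)"
  by (cases p, cases q) (auto simp: tri_adj_def hex_center_def)

lemma unit_diff:
  assumes "tri_adj p q" "tri_adj p r" "hex_center (fst q - fst r, snd q - snd r)"
  shows "q = r \<or> (fst q - fst r, snd q - snd r) \<in> {(1,1),(-1,-1),(2,-2),(-2,2)}"
proof -
  obtain a b where p: "p = (a,b)" by (cases p)
  obtain c d where q: "q = (c,d)" by (cases q)
  obtain e f where r: "r = (e,f)" by (cases r)
  show ?thesis using assms unfolding p q r tri_adj_hex mem_hex
    by (elim disjE conjE; simp add: hex_center_def)
qed

lemma tri_pair_adj:
  assumes "t \<in> KF" "card t = 3" "x \<in> t" "y \<in> t" "x \<noteq> y"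
  shows "tri_adj x y"
proof -
  obtain a b where ab: "t = up_tri a b \<or> t = down_tri a b" using KF_card3[OF assms(1,2)] by blast
  obtain c d where x: "x = (c,d)" by (cases x)
  obtain e f where y: "y = (e,f)" by (cases y)
  show ?thesis using ab assms(3,4,5) unfolding x y tri_adj_hex mem_hex
    by (elim disjE; simp only: mem_up mem_down; elim disjE conjE; simp)
qed

lemma ty2_two_tri:
  assumes p: "ty2 p" and pq: "tri_adj p q"
    and t1: "t1 \<in> KF" "card t1 = 3" "p \<in> t1" "q \<in> t1"
    and t2: "t2 \<in> KF" "card t2 = 3" "p \<in> t2" "q \<in> t2"
  shows "t1 = t2"
proof -
  obtain a b where pab: "p = (a,b)" by (cases p)
  have ta: "(a - b) mod 4 = 2" using p pab by (simp add: ty2_def)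
  have cl: "t = up_tri a b \<or> t = down_tri (a-1) (b-1)" if t: "t \<in> KF" "card t = 3" "p \<in> t" for t
  proof -
    obtain x y where xy: "ty2 (x,y)" "t = up_tri x y \<or> t = down_tri x y" using KF_card3[OF t(1,2)] by blast
    have txy: "(x - y) mod 4 = 2" using xy(1) by (simp add: ty2_def)
    from xy(2) show ?thesis
    proof
      assume u: "t = up_tri x y"
      have "(a = x \<and> b = y) \<or> (a = x+1 \<and> b = y) \<or> (a = x \<and> b = y+1)" using t(3) u pab mem_up by simp
      moreover have "\<not> (a = x+1 \<and> b = y)"
      proof
        assume "a = x+1 \<and> b = y"
        then have "(a - b) mod 4 = ((x - y) + 1) mod 4" by (simp add: algebra_simps)
        then show False using ta txy by presburger
      qed
      moreover have "\<not> (a = x \<and> b = y+1)"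
      proof
        assume "a = x \<and> b = y+1"
        then have "(a - b) mod 4 = ((x - y) - 1) mod 4" by (simp add: algebra_simps)
        then show False using ta txy by presburger
      qed
      ultimately show ?thesis using u by auto
    next
      assume u: "t = down_tri x y"
      have "(a = x+1 \<and> b = y) \<or> (a = x \<and> b = y+1) \<or> (a = x+1 \<and> b = y+1)" using t(3) u pab mem_down by simp
      moreover have "\<not> (a = x+1 \<and> b = y)"
      proof
        assume "a = x+1 \<and> b = y"
        then have "(a - b) mod 4 = ((x - y) + 1) mod 4" by (simp add: algebra_simps)
        then show False using ta txy by presburger
      qed
      moreover have "\<not> (a = x \<and> b = y+1)"
      proof
        assume "a = x \<and> b = y+1"
        then have "(a - b) mod 4 = ((x - y) - 1) mod 4" by (simp add: algebra_simps)
        then show False using ta txy by presburger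
      qed
      ultimately show ?thesis using u by auto
    qed
  qed
  have pq': "p \<noteq> q" using pq tri_adj_irrefl by metis
  have disj: "\<not> (q \<in> up_tri a b \<and> q \<in> down_tri (a-1) (b-1))"
  proof
    assume "q \<in> up_tri a b \<and> q \<in> down_tri (a-1) (b-1)"
    then show False using pq' pab by (auto simp: up_tri_def down_tri_def)
  qed
  show ?thesis using cl[OF t1(1,2,3)] cl[OF t2(1,2,3)] t1(4) t2(4) disj by auto
qed


definition Pinv :: "(int \<times> int \<Rightarrow> int \<times> int) set \<Rightarrow> (int \<times> int) set \<Rightarrow> bool" where
  "Pinv \<Gamma> x \<longleftrightarrow> (\<exists>E\<in>quotE \<Gamma>. x \<in> E \<and> (\<exists>T1\<in>quotF \<Gamma>. \<exists>T2\<in>quotF \<Gamma>.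
      T1 \<noteq> T2 \<and> card T1 = 3 \<and> card T2 = 3 \<and> E \<subseteq> T1 \<and> E \<subseteq> T2))"

lemma PinvI:
  assumes a1: "E \<in> quotE \<Gamma>" and a2: "x \<in> E" and a3: "T1 \<in> quotF \<Gamma>" and a4: "T2 \<in> quotF \<Gamma>"
    and a5: "T1 \<noteq> T2" and a6: "card T1 = 3" and a7: "card T2 = 3" and a8: "E \<subseteq> T1" and a9: "E \<subseteq> T2"
  shows "Pinv \<Gamma> x"
proof -
  have d: "\<exists>T2\<in>quotF \<Gamma>. T1 \<noteq> T2 \<and> card T1 = 3 \<and> card T2 = 3 \<and> E \<subseteq> T1 \<and> E \<subseteq> T2"
    by (rule bexI[where x="T2"]) (simp_all only: a4 a5 a6 a7 a8 a9 simp_thms)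
  have e: "\<exists>T1\<in>quotF \<Gamma>. \<exists>T2\<in>quotF \<Gamma>. T1 \<noteq> T2 \<and> card T1 = 3 \<and> card T2 = 3 \<and> E \<subseteq> T1 \<and> E \<subseteq> T2"
    by (rule bexI[where x="T1"]) (rule d, rule a3)
  have g: "x \<in> E \<and> (\<exists>T1\<in>quotF \<Gamma>. \<exists>T2\<in>quotF \<Gamma>. T1 \<noteq> T2 \<and> card T1 = 3 \<and> card T2 = 3 \<and> E \<subseteq> T1 \<and> E \<subseteq> T2)"
    using a2 e by (rule conjI)
  show ?thesis unfolding Pinv_def
    by (rule bexI[where x="E"]) (rule g, rule a1)
qed

lemma Pinv_pres:
  assumes f: "f \<in> map_aut (quot_map \<Gamma>)" and P: "Pinv \<Gamma> x" shows "Pinv \<Gamma> (f x)"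
proof -
  have f': "f \<in> map_aut (quotV \<Gamma>, quotE \<Gamma>, quotF \<Gamma>)" using f by (simp add: quot_map_def)
  have inj: "inj f" using map_aut_inj[OF f'] .
  obtain E T1 T2 where E: "E \<in> quotE \<Gamma>" "x \<in> E" and h: "T1 \<in> quotF \<Gamma>" "T2 \<in> quotF \<Gamma>" "T1 \<noteq> T2"
    "card T1 = 3" "card T2 = 3" "E \<subseteq> T1" "E \<subseteq> T2"
    using P unfolding Pinv_def by (elim bexE conjE) (rule that, assumption+)
  have a1: "f ` E \<in> quotE \<Gamma>" using map_aut_E[OF f' E(1)] .
  have a2: "f x \<in> f ` E" using E(2) by (rule imageI)
  have a3: "f ` T1 \<in> quotF \<Gamma>" using map_aut_F[OF f' h(1)] .
  have a4: "f ` T2 \<in> quotF \<Gamma>" using map_aut_F[OF f' h(2)] .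
  have a5: "f ` T1 \<noteq> f ` T2" using h(3) inj by (simp add: inj_image_eq_iff)
  have a6: "card (f ` T1) = 3" using h(4) card_image[OF inj_on_subset[OF inj subset_UNIV]] by simp
  have a7: "card (f ` T2) = 3" using h(5) card_image[OF inj_on_subset[OF inj subset_UNIV]] by simp
  have a8: "f ` E \<subseteq> f ` T1" using h(6) by (rule image_mono)
  have a9: "f ` E \<subseteq> f ` T2" using h(7) by (rule image_mono)
  have d: "\<exists>T2\<in>quotF \<Gamma>. f ` T1 \<noteq> T2 \<and> card (f ` T1) = 3 \<and> card T2 = 3 \<and> f ` E \<subseteq> f ` T1 \<and> f ` E \<subseteq> T2"
    by (rule bexI[where x="f ` T2"]) (simp_all only: a4 a5 a6 a7 a8 a9 simp_thms)
  have e: "\<exists>T1\<in>quotF \<Gamma>. \<exists>T2\<in>quotF \<Gamma>. T1 \<noteq> T2 \<and> card T1 = 3 \<and> card T2 = 3 \<and> f ` E \<subseteq> T1 \<and> f ` E \<subseteq> T2"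
    by (rule bexI[where x="f ` T1"]) (rule d, rule a3)
  have g: "f x \<in> f ` E \<and> (\<exists>T1\<in>quotF \<Gamma>. \<exists>T2\<in>quotF \<Gamma>. T1 \<noteq> T2 \<and> card T1 = 3 \<and> card T2 = 3 \<and> f ` E \<subseteq> T1 \<and> f ` E \<subseteq> T2)"
    using a2 e by (rule conjI)
  show ?thesis unfolding Pinv_def
    by (rule bexI[where x="f ` E"]) (rule g, rule a1)
qed

context
  fixes \<Gamma> :: "(int \<times> int \<Rightarrow> int \<times> int) set"
  assumes sg: "is_subgroup_aut \<Gamma>" and fr: "acts_freely \<Gamma>" and tor: "quotient_is_torus \<Gamma>"
    and pol: "quotient_polyhedral \<Gamma>"
begin

lemma inj_face: "F \<in> KF \<Longrightarrow> inj_on (aut_orbit \<Gamma>) F"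
proof -
  assume F: "F \<in> KF"
  have "\<forall>f\<in>KF. inj_on (aut_orbit \<Gamma>) f" using pol unfolding quotient_polyhedral_def by (rule conjunct1)
  then show ?thesis using F by (rule bspec)
qed

lemma card_face: "F \<in> KF \<Longrightarrow> card (aut_orbit \<Gamma> ` F) = card F"
  by (rule card_image[OF inj_face])

lemma oeq: "p \<in> KV \<Longrightarrow> q \<in> KV \<Longrightarrow> aut_orbit \<Gamma> p = aut_orbit \<Gamma> q \<longleftrightarrow> (fst q - fst p, snd q - snd p) \<in> Lam \<Gamma>"
  by (rule orbit_eq_iff[OF sg fr tor])

lemma LamL: "t \<in> Lam \<Gamma> \<Longrightarrow> hex_center t" using Lam_L[OF sg fr tor] .

lemma not11: "(1,1) \<notin> Lam \<Gamma>"
proof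
  assume a: "(1,1) \<in> Lam \<Gamma>"
  have H: "hexagon (0,0) \<in> KF" by (rule hexKF) (simp add: hex_center_def)
  have m: "(0,-1) \<in> hexagon (0,0)" "(1,0) \<in> hexagon (0,0)" by (simp_all add: hexagon_eq)
  have "aut_orbit \<Gamma> (0,-1) = aut_orbit \<Gamma> (1,0)" using oeq a by simp
  then have "((0::int),(-1::int)) = (1,0)" using inj_face[OF H] m by (meson inj_onD)
  then show False by simp
qed

lemma not22: "(2,-2) \<notin> Lam \<Gamma>"
proof
  assume a: "(2,-2) \<in> Lam \<Gamma>"
  have H: "hexagon (0,0) \<in> KF" by (rule hexKF) (simp add: hex_center_def)
  have m: "(-1,1) \<in> hexagon (0,0)" "(1,-1) \<in> hexagon (0,0)" by (simp_all add: hexagon_eq)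
  have "aut_orbit \<Gamma> (-1,1) = aut_orbit \<Gamma> (1,-1)" using oeq a by simp
  then have "((-1::int),(1::int)) = (1,-1)" using inj_face[OF H] m by (meson inj_onD)
  then show False by simp
qed

lemma bad_notin: assumes "d \<in> {(1,1),(-1,-1),(2,-2),(-2,2)}" shows "d \<notin> Lam \<Gamma>"
proof -
  have n1: "(-1,-1) \<notin> Lam \<Gamma>"
  proof
    assume "(-1,-1) \<in> Lam \<Gamma>"
    then have "(- fst (-1::int,-1::int), - snd (-1::int,-1::int)) \<in> Lam \<Gamma>" by (rule Lam_neg[OF sg fr tor])
    then show False using not11 by simp
  qed
  have n2: "(-2,2) \<notin> Lam \<Gamma>"
  proof
    assume "(-2,2) \<in> Lam \<Gamma>"
    then have "(- fst (-2::int,2::int), - snd (-2::int,2::int)) \<in> Lam \<Gamma>" by (rule Lam_neg[OF sg fr tor])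
    then show False using not22 by simp
  qed
  from assms show ?thesis
    by (elim insertE emptyE) (simp_all only: not11 not22 n1 n2 not_False_eq_True)
qed

lemma tri_lift:
  assumes t1: "t1 \<in> KF" "card t1 = 3" and p: "p \<in> KV" and q: "q \<in> KV" and pq: "tri_adj p q"
    and op: "aut_orbit \<Gamma> p \<in> aut_orbit \<Gamma> ` t1" and oq: "aut_orbit \<Gamma> q \<in> aut_orbit \<Gamma> ` t1"
  shows "\<exists>t\<in>KF. card t = 3 \<and> aut_orbit \<Gamma> ` t = aut_orbit \<Gamma> ` t1 \<and> p \<in> t \<and> q \<in> t"
proof -
  have sub: "t1 \<subseteq> KV" using KF_sub[OF t1(1)] .
  obtain p1 where p1: "p1 \<in> t1" "aut_orbit \<Gamma> p = aut_orbit \<Gamma> p1" using op by blast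
  have p1K: "p1 \<in> KV" using p1(1) sub by blast
  define s1 where "s1 = fst p - fst p1"
  define s2 where "s2 = snd p - snd p1"
  have sL: "(s1,s2) \<in> Lam \<Gamma>" using oeq[OF p1K p] p1(2) unfolding s1_def s2_def by simp
  have hs: "hex_center (s1,s2)" using LamL[OF sL] .
  define t where "t = tr (s1,s2) ` t1"
  have tK: "t \<in> KF" unfolding t_def using tr_KF[OF hs t1(1)] .
  have inj: "inj (tr (s1,s2))" using aut_inj[OF tr_aut[OF hs]] .
  have tc: "card t = 3" unfolding t_def using t1(2) inj by (simp add: card_image inj_on_subset[OF inj])
  have ot: "aut_orbit \<Gamma> (tr (s1,s2) x) = aut_orbit \<Gamma> x" if x: "x \<in> t1" for x
  proof -
    have xK: "x \<in> KV" using x sub by blast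
    have e: "tr (s1,s2) x = (fst x + s1, snd x + s2)" using xK by (simp add: tr_def)
    have trK: "tr (s1,s2) x \<in> KV" using tr_KV[OF hs xK] .
    have d: "(fst (tr (s1,s2) x) - fst x, snd (tr (s1,s2) x) - snd x) = (s1,s2)" using e by simp
    have "aut_orbit \<Gamma> x = aut_orbit \<Gamma> (tr (s1,s2) x)" using oeq[OF xK trK] d sL by simp
    then show ?thesis by simp
  qed
  have oimg: "aut_orbit \<Gamma> ` t = aut_orbit \<Gamma> ` t1" unfolding t_def image_image using ot by (rule image_cong[OF refl])
  have pt: "p \<in> t"
  proof -
    have "tr (s1,s2) p1 = p" using p1K by (simp add: tr_def s1_def s2_def)
    then show ?thesis unfolding t_def using p1(1) by (metis imageI)
  qed
  obtain q1 where q1: "q1 \<in> t" "aut_orbit \<Gamma> q = aut_orbit \<Gamma> q1" using oq oimg by (metis imageE)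
  have tsub: "t \<subseteq> KV" using KF_sub[OF tK] .
  have q1K: "q1 \<in> KV" using q1(1) tsub by blast
  have "q1 \<noteq> p"
  proof
    assume "q1 = p"
    then have "(fst q - fst p, snd q - snd p) \<in> Lam \<Gamma>" using oeq[OF p q] q1(2) by simp
    then show False using unit_notL[OF pq] LamL by blast
  qed
  then have pq1: "tri_adj p q1" using tri_pair_adj[OF tK tc pt q1(1)] by metis
  have dL: "(fst q - fst q1, snd q - snd q1) \<in> Lam \<Gamma>" using oeq[OF q1K q] q1(2) by simp
  have "q = q1" using unit_diff[OF pq pq1 LamL[OF dL]] bad_notin dL by blast
  then have "q \<in> t" using q1(1) by simp
  then show ?thesis using tK tc oimg pt by blast
qed

lemma notP20: "\<not> Pinv \<Gamma> (aut_orbit \<Gamma> (2,0))"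
proof
  assume "Pinv \<Gamma> (aut_orbit \<Gamma> (2,0))"
  then obtain E T1 T2 where h: "E \<in> quotE \<Gamma>" "aut_orbit \<Gamma> (2,0) \<in> E" "T1 \<in> quotF \<Gamma>" "T2 \<in> quotF \<Gamma>" "T1 \<noteq> T2"
    "card T1 = 3" "card T2 = 3" "E \<subseteq> T1" "E \<subseteq> T2" unfolding Pinv_def by blast
  obtain e where e: "e \<in> KE" "E = aut_orbit \<Gamma> ` e" using h(1) by (auto simp: quotE_def)
  obtain p0 q0 where pq0: "e = {p0,q0}" "p0 \<in> KV" "q0 \<in> KV" "tri_adj p0 q0" using e(1) KE_iff by blast
  have "\<exists>p q. e = {p,q} \<and> p \<in> KV \<and> q \<in> KV \<and> tri_adj p q \<and> aut_orbit \<Gamma> (2,0) = aut_orbit \<Gamma> p"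
  proof -
    have "aut_orbit \<Gamma> (2,0) = aut_orbit \<Gamma> p0 \<or> aut_orbit \<Gamma> (2,0) = aut_orbit \<Gamma> q0" using h(2) e(2) pq0(1) by auto
    then show ?thesis
    proof
      assume "aut_orbit \<Gamma> (2,0) = aut_orbit \<Gamma> p0" then show ?thesis using pq0 by blast
    next
      assume "aut_orbit \<Gamma> (2,0) = aut_orbit \<Gamma> q0"
      moreover have "e = {q0,p0}" using pq0(1) by auto
      ultimately show ?thesis using pq0 tri_adj_sym by blast
    qed
  qed
  then obtain p q where pq: "e = {p,q}" "p \<in> KV" "q \<in> KV" "tri_adj p q" "aut_orbit \<Gamma> (2,0) = aut_orbit \<Gamma> p" by blast
  have k20: "(2::int,0::int) \<in> KV" by simp
  have "(fst p - 2, snd p - 0) \<in> Lam \<Gamma>" using oeq[OF k20 pq(2)] pq(5) by simp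
  then have "hex_center (fst p - 2, snd p - 0)" using LamL by blast
  then have tp: "ty2 p" unfolding hex_center_def ty2_def by simp presburger
  obtain t1 where t1: "t1 \<in> KF" "T1 = aut_orbit \<Gamma> ` t1" using h(3) by (auto simp: quotF_def)
  obtain t2 where t2: "t2 \<in> KF" "T2 = aut_orbit \<Gamma> ` t2" using h(4) by (auto simp: quotF_def)
  have c1: "card t1 = 3" using h(6) t1 card_face by simp
  have c2: "card t2 = 3" using h(7) t2 card_face by simp
  have o1: "aut_orbit \<Gamma> p \<in> aut_orbit \<Gamma> ` t1" "aut_orbit \<Gamma> q \<in> aut_orbit \<Gamma> ` t1" using h(8) e(2) pq(1) t1(2) by auto
  have o2: "aut_orbit \<Gamma> p \<in> aut_orbit \<Gamma> ` t2" "aut_orbit \<Gamma> q \<in> aut_orbit \<Gamma> ` t2" using h(9) e(2) pq(1) t2(2) by auto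
  obtain s1 where s1: "s1 \<in> KF" "card s1 = 3" "aut_orbit \<Gamma> ` s1 = aut_orbit \<Gamma> ` t1" "p \<in> s1" "q \<in> s1"
    using tri_lift[OF t1(1) c1 pq(2) pq(3) pq(4) o1] by blast
  obtain s2 where s2: "s2 \<in> KF" "card s2 = 3" "aut_orbit \<Gamma> ` s2 = aut_orbit \<Gamma> ` t2" "p \<in> s2" "q \<in> s2"
    using tri_lift[OF t2(1) c2 pq(2) pq(3) pq(4) o2] by blast
  have "s1 = s2" using ty2_two_tri[OF tp pq(4) s1(1,2,4,5) s2(1,2,4,5)] .
  then have "T1 = T2" using s1(3) s2(3) t1(2) t2(2) by simp
  then show False using h(5) by simp
qed

lemma P10: "Pinv \<Gamma> (aut_orbit \<Gamma> (1,0))"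
proof -
  let ?o = "aut_orbit \<Gamma>"
  have kE: "{(1,0),(2,-1)} \<in> KE" by (rule KE_intro) (simp_all add: tri_adj_def)
  have kU: "up_tri 1 (-1) \<in> KF" by (rule upKF) (simp add: ty2_def)
  have kD: "down_tri 1 (-1) \<in> KF" by (rule downKF) (simp add: ty2_def)
  have E: "?o ` {(1,0),(2,-1)} \<in> quotE \<Gamma>" unfolding quotE_def by (rule imageI[OF kE])
  have T1: "?o ` up_tri 1 (-1) \<in> quotF \<Gamma>" unfolding quotF_def by (rule imageI[OF kU])
  have T2: "?o ` down_tri 1 (-1) \<in> quotF \<Gamma>" unfolding quotF_def by (rule imageI[OF kD])
  have c1: "card (?o ` up_tri 1 (-1)) = 3" using card_face[OF kU] card_up by simp
  have c2: "card (?o ` down_tri 1 (-1)) = 3" using card_face[OF kD] card_down by simp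
  have s1: "?o ` {(1,0),(2,-1)} \<subseteq> ?o ` up_tri 1 (-1)" by (rule image_mono) (simp add: up_tri_def)
  have s2: "?o ` {(1,0),(2,-1)} \<subseteq> ?o ` down_tri 1 (-1)" by (rule image_mono) (simp add: down_tri_def)
  have ne: "?o ` up_tri 1 (-1) \<noteq> ?o ` down_tri 1 (-1)"
  proof
    assume eq: "?o ` up_tri 1 (-1) = ?o ` down_tri 1 (-1)"
    have "?o (1,-1) \<in> ?o ` up_tri 1 (-1)" by (simp add: up_tri_def)
    then have "?o (1,-1) \<in> ?o ` down_tri 1 (-1)" using eq by simp
    then obtain x where x: "x \<in> down_tri 1 (-1)" "?o (1,-1) = ?o x" by blast
    have xK: "x \<in> KV" using x(1) KF_sub[OF kD] by blast
    have k: "(1::int,-1::int) \<in> KV" by simp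
    have d: "(fst x - 1, snd x - -1) \<in> Lam \<Gamma>" using oeq[OF k xK] x(2) by simp
    have "x = (2,-1) \<or> x = (1,0) \<or> x = (2,0)" using x(1) by (auto simp: down_tri_def)
    then show False
    proof (elim disjE)
      assume "x = (2,-1)" then have "hex_center (1,0)" using d LamL by simp
      then show False by (simp add: hex_center_def)
    next
      assume "x = (1,0)" then have "hex_center (0,1)" using d LamL by simp
      then show False by (simp add: hex_center_def)
    next
      assume "x = (2,0)" then show False using d not11 by simp
    qed
  qed
  have "?o (1,0) \<in> ?o ` {(1,0),(2,-1)}" by simp
  then show ?thesis by (rule PinvI[OF E _ T1 T2 ne c1 c2 s1 s2])
qed

end


lemma quot_aut_id: "id \<in> map_aut (quot_map \<Gamma>)"
  unfolding quot_map_def by (rule map_aut_id)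

lemma quot_aut_comp: "f \<in> map_aut (quot_map \<Gamma>) \<Longrightarrow> g \<in> map_aut (quot_map \<Gamma>) \<Longrightarrow> f \<circ> g \<in> map_aut (quot_map \<Gamma>)"
  unfolding quot_map_def by (rule map_aut_comp)

lemma orbit_shift:
  assumes f: "f \<in> map_aut (quot_map \<Gamma>)" and h: "h \<in> map_aut (quot_map \<Gamma>)" and hf: "h (f y) = y"
  shows "aut_orbit (map_aut (quot_map \<Gamma>)) (f y) = aut_orbit (map_aut (quot_map \<Gamma>)) y"
proof
  show "aut_orbit (map_aut (quot_map \<Gamma>)) (f y) \<subseteq> aut_orbit (map_aut (quot_map \<Gamma>)) y"
  proof
    fix z assume "z \<in> aut_orbit (map_aut (quot_map \<Gamma>)) (f y)"
    then obtain g where g: "g \<in> map_aut (quot_map \<Gamma>)" "z = g (f y)" unfolding aut_orbit_def by blast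
    have "g \<circ> f \<in> map_aut (quot_map \<Gamma>)" using quot_aut_comp[OF g(1) f] .
    then have "(\<lambda>g. g y) (g \<circ> f) \<in> (\<lambda>g. g y) ` map_aut (quot_map \<Gamma>)" by (rule imageI)
    then show "z \<in> aut_orbit (map_aut (quot_map \<Gamma>)) y" unfolding aut_orbit_def using g(2) by simp
  qed
  show "aut_orbit (map_aut (quot_map \<Gamma>)) y \<subseteq> aut_orbit (map_aut (quot_map \<Gamma>)) (f y)"
  proof
    fix z assume "z \<in> aut_orbit (map_aut (quot_map \<Gamma>)) y"
    then obtain g where g: "g \<in> map_aut (quot_map \<Gamma>)" "z = g y" unfolding aut_orbit_def by blast
    have "g \<circ> h \<in> map_aut (quot_map \<Gamma>)" using quot_aut_comp[OF g(1) h] .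
    then have "(\<lambda>g. g (f y)) (g \<circ> h) \<in> (\<lambda>g. g (f y)) ` map_aut (quot_map \<Gamma>)" by (rule imageI)
    then show "z \<in> aut_orbit (map_aut (quot_map \<Gamma>)) (f y)" unfolding aut_orbit_def using g(2) hf by simp
  qed
qed

context
  fixes \<Gamma> :: "(int \<times> int \<Rightarrow> int \<times> int) set"
  assumes sg: "is_subgroup_aut \<Gamma>" and fr: "acts_freely \<Gamma>" and tor: "quotient_is_torus \<Gamma>"
    and pol: "quotient_polyhedral \<Gamma>"
begin

abbreviation "GG \<equiv> map_aut (quot_map \<Gamma>)"

lemma Phi_tr_orbit: "hex_center (t1,t2) \<Longrightarrow> q \<in> KV \<Longrightarrow> Phi \<Gamma> (tr (t1,t2)) (aut_orbit \<Gamma> q) = aut_orbit \<Gamma> (tr (t1,t2) q)"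
  using tr_compat[OF sg fr tor] quotV_orbit by (simp add: Phi_def)

lemma Phi_rho_orbit: "q \<in> KV \<Longrightarrow> Phi \<Gamma> (rho (0,0)) (aut_orbit \<Gamma> q) = aut_orbit \<Gamma> (rho (0,0) q)"
  using rho_compat[OF sg fr tor] quotV_orbit by (simp add: Phi_def)

lemma shift_tr:
  assumes t: "hex_center (t1,t2)" and q: "q \<in> KV"
  shows "aut_orbit GG (aut_orbit \<Gamma> (tr (t1,t2) q)) = aut_orbit GG (aut_orbit \<Gamma> q)"
proof -
  have t': "hex_center (-t1,-t2)" using t unfolding hex_center_def by simp presburger
  have "aut_orbit GG (Phi \<Gamma> (tr (t1,t2)) (aut_orbit \<Gamma> q)) = aut_orbit GG (aut_orbit \<Gamma> q)"
    by (rule orbit_shift[OF tr_desc[OF sg fr tor t] tr_desc[OF sg fr tor t'] tr_desc_inv[OF sg fr tor t q]])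
  then show ?thesis using Phi_tr_orbit[OF t q] by simp
qed

lemma shift_rho:
  assumes q: "q \<in> KV"
  shows "aut_orbit GG (aut_orbit \<Gamma> (rho (0,0) q)) = aut_orbit GG (aut_orbit \<Gamma> q)"
proof -
  have "aut_orbit GG (Phi \<Gamma> (rho (0,0)) (aut_orbit \<Gamma> q)) = aut_orbit GG (aut_orbit \<Gamma> q)"
    by (rule orbit_shift[OF rho_desc[OF sg fr tor] rho_desc[OF sg fr tor] rho_desc_inv[OF sg fr tor q]])
  then show ?thesis using Phi_rho_orbit[OF q] by simp
qed

lemma two_orbits:
  assumes p: "p \<in> KV"
  shows "aut_orbit GG (aut_orbit \<Gamma> p) = aut_orbit GG (aut_orbit \<Gamma> (1,0)) \<or>
         aut_orbit GG (aut_orbit \<Gamma> p) = aut_orbit GG (aut_orbit \<Gamma> (2,0))"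
proof -
  obtain a b where ab: "p = (a,b)" by (cases p)
  have k: "(a - b) mod 4 = 1 \<or> (a - b) mod 4 = 2 \<or> (a - b) mod 4 = 3" using p ab by simp presburger
  have k10: "(1::int,0::int) \<in> KV" and k20: "(2::int,0::int) \<in> KV" and km: "(-1::int,0::int) \<in> KV" by simp_all
  from k show ?thesis
  proof (elim disjE)
    assume h: "(a - b) mod 4 = 1"
    have t: "hex_center (a-1,b)" using h by (simp add: hex_center_def) presburger
    have "tr (a-1,b) (1,0) = p" using ab by (simp add: tr_def)
    then show ?thesis using shift_tr[OF t k10] by simp
  next
    assume h: "(a - b) mod 4 = 2"
    have t: "hex_center (a-2,b)" using h by (simp add: hex_center_def) presburger
    have "tr (a-2,b) (2,0) = p" using ab by (simp add: tr_def)
    then show ?thesis using shift_tr[OF t k20] by simp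
  next
    assume h: "(a - b) mod 4 = 3"
    have t: "hex_center (a+1,b)" using h by (simp add: hex_center_def) presburger
    have e1: "tr (a+1,b) (-1,0) = p" using ab by (simp add: tr_def)
    have e2: "rho (0,0) (1,0) = (-1,0)" by (simp add: rho_def)
    have "aut_orbit GG (aut_orbit \<Gamma> p) = aut_orbit GG (aut_orbit \<Gamma> (-1,0))"
      using shift_tr[OF t km] e1 by simp
    also have "\<dots> = aut_orbit GG (aut_orbit \<Gamma> (1,0))" using shift_rho[OF k10] e2 by simp
    finally show ?thesis by simp
  qed
qed

lemma distinct_orbits:
  "aut_orbit GG (aut_orbit \<Gamma> (1,0)) \<noteq> aut_orbit GG (aut_orbit \<Gamma> (2,0))"
proof
  assume eq: "aut_orbit GG (aut_orbit \<Gamma> (1,0)) = aut_orbit GG (aut_orbit \<Gamma> (2,0))"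
  have "aut_orbit \<Gamma> (2,0) \<in> aut_orbit GG (aut_orbit \<Gamma> (2,0))"
    unfolding aut_orbit_def using quot_aut_id by (metis id_apply image_eqI)
  then have "aut_orbit \<Gamma> (2,0) \<in> aut_orbit GG (aut_orbit \<Gamma> (1,0))" using eq by simp
  then obtain f where f: "f \<in> GG" "aut_orbit \<Gamma> (2,0) = f (aut_orbit \<Gamma> (1,0))"
    unfolding aut_orbit_def by blast
  have "Pinv \<Gamma> (f (aut_orbit \<Gamma> (1,0)))" by (rule Pinv_pres[OF f(1) P10[OF sg fr tor pol]])
  then show False using f(2) notP20[OF sg fr tor pol] by simp
qed

lemma final_card: "card (aut_orbit GG ` quotV \<Gamma>) = 2"
proof -
  let ?A = "aut_orbit GG (aut_orbit \<Gamma> (1,0))"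
  let ?B = "aut_orbit GG (aut_orbit \<Gamma> (2,0))"
  have "aut_orbit GG ` quotV \<Gamma> = {?A, ?B}"
  proof
    show "aut_orbit GG ` quotV \<Gamma> \<subseteq> {?A, ?B}"
    proof
      fix z assume "z \<in> aut_orbit GG ` quotV \<Gamma>"
      then obtain p where p: "p \<in> KV" "z = aut_orbit GG (aut_orbit \<Gamma> p)" unfolding quotV_def by blast
      then show "z \<in> {?A, ?B}" using two_orbits[OF p(1)] by blast
    qed
    have k10: "(1::int,0::int) \<in> KV" and k20: "(2::int,0::int) \<in> KV" by simp_all
    have "aut_orbit \<Gamma> (1,0) \<in> quotV \<Gamma>" "aut_orbit \<Gamma> (2,0) \<in> quotV \<Gamma>"
      using quotV_orbit k10 k20 by blast+
    then show "{?A, ?B} \<subseteq> aut_orbit GG ` quotV \<Gamma>" by blast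
  qed
  then show ?thesis using distinct_orbits by simp
qed

end

theorem theorem1:
  fixes \<Gamma> :: "(int \<times> int \<Rightarrow> int \<times> int) set"
  assumes "is_subgroup_aut \<Gamma>"
    and "acts_freely \<Gamma>"
    and "quotient_is_torus \<Gamma>"
    and "quotient_polyhedral \<Gamma>"
  shows "card (aut_orbit (map_aut (quot_map \<Gamma>)) ` quotV \<Gamma>) = 2"
  by (rule final_card[OF assms])

end
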